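(* Let $n\ge1$ be an integer and $f\in C(\overline\Omega_H)$. Define $$\mathcal I_n^*f(\mathbf t)=\sum_{\mathbf j\in\mathbb H_n^*}f(\tfrac{\mathbf j}{4n})\,\ell_{\mathbf j,n}(\mathbf t),\qquad \ell_{\mathbf j,n}(\mathbf t)=\Phi_n^*(\mathbf t-\tfrac{\mathbf j}{4n}),\qquad \Phi^*_n(\mathbf t)=\frac1{4n^3}\sum_{\mathbf k\in\mathbb H_n^*}c^{(n)}_{\mathbf k}\phi_{\mathbf k}(\mathbf t).$$ Then $\mathcal I_n^*f\in\mathcal T_n$ and $$\mathcal I_n^*f(\tfrac{\mathbf j}{4n})=\begin{cases} f(\tfrac{\mathbf j}{4n}), & \mathbf j\in\mathbb H_n^\circ,\\ \sum_{\mathbf k\in\mathcal S_{\mathbf j}}f(\tfrac{\mathbf k}{4n}), & \mathbf j\in\mathbb H_n^*\setminus\mathbb H_n^\circ.\end{cases}$$ Furthermore, $\Phi_n^*$ is a real function and $$\Phi_n^*(\mathbf t)=\frac1{4n^3}\Big[\tfrac12\big(D_n^H(\mathbf t)+D_{n-1}^H(\mathbf t)\big)-\tfrac13\sum_{\nu=1}^4\frac{\sin (n-1)\pi t_\nu}{\sin\pi t_\nu}\sum_{\substack{j=1\\ j\ne\nu}}^4\cos n\pi(2t_j+t_\nu)-\tfrac12\sum_{j=1}^4\cos 2\pi n t_j-\tfrac13\sum_{1\le\mu<\nu\le 4}\cos 2\pi n(t_\mu+t_\nu)\Big].$$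
   Context: Let $\mathbb R^4_H=\{\mathbf t\in\mathbb R^4: t_1+t_2+t_3+t_4=0\}$, $\mathbb Z^4_H=\mathbb Z^4\cap\mathbb R^4_H$, $\Omega_H=\{\mathbf t\in\mathbb R^4_H: -1<t_i-t_j\le1,\ 1\le i<j\le 4\}$ with closure $\overline\Omega_H$; functions on $\overline\Omega_H$ are evaluated via their restriction. Let $\mathbb H=\{\mathbf k\in\mathbb Z^4_H: k_1\equiv k_2\equiv k_3\equiv k_4\pmod4\}$, $\phi_{\mathbf k}(\mathbf t)=e^{\frac{\pi i}{2}\mathbf k\cdot\mathbf t}$, $\mathbb H_m^*=\{\mathbf k\in\mathbb H: -4m\le k_i-k_j\le 4m,\ 1\le i<j\le4\}$, $\mathbb H_n^\circ=\{\mathbf k\in\mathbb H: -4n<k_i-k_j<4n \text{ for all } i\neq j\}$, $\mathcal T_n=\operatorname{span}\{\phi_{\mathbf k}:\mathbf k\in\mathbb H_n^*\}$, and $D_m^H(\mathbf t)=\sum_{\mathbf k\in\mathbb H_m^*}\phi_{\mathbf k}(\mathbf t)$. For $\mathbf k\in\mathbb H_n^*$, $c^{(n)}_{\mathbf k}=1$ if $\max_ik_i-\min_ik_i<4n$, and otherwise $c^{(n)}_{\mathbf k}=1/\binom{p+q}{p}$ where $p$ (resp. $q$) is the number of coordinates equal to $\max_ik_i$ (resp. $\min_ik_i$). For $\mathbf j\in\mathbb H_n^*$, $\mathcal S_{\mathbf j}=\{\mathbf k\in\mathbb H_n^*: \mathbf k-\mathbf j\in 4n\,\mathbb Z^4_H\}$.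 Quotients of sines are understood by continuous extension. *)

theory Defs
  imports "HOL-Analysis.Analysis" "HOL-Library.Numeral_Type"
begin

definition RH :: "(real^4) set" where
  "RH = {t. (\<Sum>i\<in>UNIV. t$i) = 0}"

definition ZH :: "(int^4) set" where
  "ZH = {k. (\<Sum>i\<in>UNIV. k$i) = 0}"

definition OmegaH :: "(real^4) set" where
  "OmegaH = {t \<in> RH. \<forall>i j. i < j \<longrightarrow> -1 < t$i - t$j \<and> t$i - t$j \<le> 1}"

definition HH :: "(int^4) set" where
  "HH = {k \<in> ZH. \<forall>i j. (k$i - k$j) mod 4 = 0}"

definition phi :: "int^4 \<Rightarrow> real^4 \<Rightarrow> complex" where
  "phi k t = exp (\<i> * complex_of_real (pi / 2 * (\<Sum>i\<in>UNIV. real_of_int (k$i) * t$i)))"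

definition Hstar :: "nat \<Rightarrow> (int^4) set" where
  "Hstar m = {k \<in> HH. \<forall>i j. i < j \<longrightarrow> - 4 * int m \<le> k$i - k$j \<and> k$i - k$j \<le> 4 * int m}"

definition Hcirc :: "nat \<Rightarrow> (int^4) set" where
  "Hcirc n = {k \<in> HH. \<forall>i j. i \<noteq> j \<longrightarrow> - 4 * int n < k$i - k$j \<and> k$i - k$j < 4 * int n}"

definition Tn :: "nat \<Rightarrow> (real^4 \<Rightarrow> complex) set" where
  "Tn n = {g. \<exists>a :: int^4 \<Rightarrow> complex. g = (\<lambda>t. \<Sum>k\<in>Hstar n. a k * phi k t)}"

definition DH :: "nat \<Rightarrow> real^4 \<Rightarrow> complex" where
  "DH m t = (\<Sum>k\<in>Hstar m. phi k t)"

definition cmax :: "int^4 \<Rightarrow> int" where "cmax k = Max (range (\<lambda>i. k$i))"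
definition cmin :: "int^4 \<Rightarrow> int" where "cmin k = Min (range (\<lambda>i. k$i))"

definition ccoef :: "nat \<Rightarrow> int^4 \<Rightarrow> real" where
  "ccoef n k = (if cmax k - cmin k < 4 * int n then 1
     else (let p = card {i. k$i = cmax k}; q = card {i. k$i = cmin k}
           in 1 / real ((p + q) choose p)))"

definition Sset :: "nat \<Rightarrow> int^4 \<Rightarrow> (int^4) set" where
  "Sset n j = {k \<in> Hstar n. \<exists>m \<in> ZH. k - j = (4 * int n) *s m}"

definition grid :: "nat \<Rightarrow> int^4 \<Rightarrow> real^4" where
  "grid n j = (\<chi> i. real_of_int (j$i) / (4 * real n))"

definition Phistar :: "nat \<Rightarrow> real^4 \<Rightarrow> complex" where
  "Phistar n t = complex_of_real (1 / (4 * real n ^ 3)) *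
      (\<Sum>k\<in>Hstar n. complex_of_real (ccoef n k) * phi k t)"

definition ell :: "nat \<Rightarrow> int^4 \<Rightarrow> real^4 \<Rightarrow> complex" where
  "ell n j t = Phistar n (t - grid n j)"

definition Istar :: "nat \<Rightarrow> (real^4 \<Rightarrow> complex) \<Rightarrow> real^4 \<Rightarrow> complex" where
  "Istar n f t = (\<Sum>j\<in>Hstar n. f (grid n j) * ell n j t)"

text \<open>sin(m pi x)/sin(pi x), extended continuously at the zeros of sin(pi x)
  (x integer) by its limit m cos(m pi x)/cos(pi x).\<close>
definition sinq :: "real \<Rightarrow> real \<Rightarrow> real" where
  "sinq m x = (if sin (pi * x) = 0 then m * cos (m * pi * x) / cos (pi * x)
               else sin (m * pi * x) / sin (pi * x))"

end

theory Submission
  imports Defs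
begin

datatype cls = Zc | Mc | Nc

lemma UNIV_cls: "(UNIV :: cls set) = {Zc, Mc, Nc}"
  using cls.exhaust by auto

lemma sum_cls: "(\<Sum>p\<in>(UNIV::cls set). f p) = f Zc + f Mc + f Nc"
  unfolding UNIV_cls by (simp add: add.assoc)

definition cl :: "nat \<Rightarrow> nat \<Rightarrow> cls" where
  "cl n a = (if a = 0 then Zc else if a = n then Nc else Mc)"

fun St :: "nat \<Rightarrow> cls \<Rightarrow> nat set" where
  "St n Zc = {0}" | "St n Mc = {1..<n}" | "St n Nc = {n}"

lemma one_dim:
  fixes G :: "cls \<Rightarrow> nat \<Rightarrow> 'a::comm_monoid_add"
  assumes "n \<ge> 1"
  shows "(\<Sum>a\<in>{0..n}. G (cl n a) a) = (\<Sum>p\<in>UNIV. \<Sum>a\<in>St n p. G p a)"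
proof -
  have e: "{0..n} = insert 0 (insert n {1..<n})" using assms by auto
  have "(\<Sum>a\<in>{0..n}. G (cl n a) a) = G (cl n 0) 0 + (G (cl n n) n + (\<Sum>a\<in>{1..<n}. G (cl n a) a))"
    unfolding e using assms by (simp add: sum.insert)
  also have "(\<Sum>a\<in>{1..<n}. G (cl n a) a) = (\<Sum>a\<in>{1..<n}. G Mc a)"
    by (rule sum.cong) (auto simp: cl_def)
  finally show ?thesis using assms by (simp add: sum_cls cl_def add_ac)
qed

definition T :: "nat \<Rightarrow> 'a::comm_ring_1 \<Rightarrow> cls \<Rightarrow> 'a" where
  "T n x p = (\<Sum>a\<in>St n p. x ^ a)"

lemma one_dimT:
  fixes G :: "cls \<Rightarrow> 'a::comm_ring_1"
  assumes "n \<ge> 1"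
  shows "(\<Sum>a\<in>{0..n}. G (cl n a) * x^a) = (\<Sum>p\<in>UNIV. G p * T n x p)"
  using one_dim[OF assms, of "\<lambda>p a. G p * x^a"] by (simp add: T_def sum_distrib_left)

lemma pattern_sum:
  fixes h :: "cls \<Rightarrow> cls \<Rightarrow> cls \<Rightarrow> cls \<Rightarrow> 'a::comm_ring_1"
  assumes "n \<ge> 1"
  shows "(\<Sum>a\<in>{0..n}. \<Sum>b\<in>{0..n}. \<Sum>c\<in>{0..n}. \<Sum>d\<in>{0..n}.
            h (cl n a) (cl n b) (cl n c) (cl n d) * (x1^a * x2^b * x3^c * x4^d))
       = (\<Sum>p\<in>UNIV. \<Sum>q\<in>UNIV. \<Sum>r\<in>UNIV. \<Sum>s\<in>UNIV.
            h p q r s * (T n x1 p * T n x2 q * T n x3 r * T n x4 s))"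
proof -
  have "(\<Sum>a\<in>{0..n}. \<Sum>b\<in>{0..n}. \<Sum>c\<in>{0..n}. \<Sum>d\<in>{0..n}.
            h (cl n a) (cl n b) (cl n c) (cl n d) * (x1^a * x2^b * x3^c * x4^d))
      = (\<Sum>a\<in>{0..n}. \<Sum>b\<in>{0..n}. \<Sum>c\<in>{0..n}. \<Sum>d\<in>{0..n}.
            (h (cl n a) (cl n b) (cl n c) (cl n d) * (x1^a * x2^b * x3^c)) * x4^d)"
    by (simp add: mult_ac)
  also have "\<dots> = (\<Sum>a\<in>{0..n}. \<Sum>b\<in>{0..n}. \<Sum>c\<in>{0..n}. \<Sum>s\<in>UNIV.
            (h (cl n a) (cl n b) (cl n c) s * (x1^a * x2^b)) * T n x4 s * x3^c)"
    by (intro sum.cong refl, subst one_dimT[OF assms]) (simp add: mult_ac)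
  also have "\<dots> = (\<Sum>a\<in>{0..n}. \<Sum>b\<in>{0..n}. \<Sum>s\<in>UNIV. \<Sum>c\<in>{0..n}.
            (h (cl n a) (cl n b) (cl n c) s * (x1^a * x2^b)) * T n x4 s * x3^c)"
    by (intro sum.cong refl, rule sum.swap)
  also have "\<dots> = (\<Sum>a\<in>{0..n}. \<Sum>b\<in>{0..n}. \<Sum>s\<in>UNIV. \<Sum>r\<in>UNIV.
            (h (cl n a) (cl n b) r s * x1^a * T n x4 s * T n x3 r) * x2^b)"
    by (intro sum.cong refl, subst one_dimT[OF assms]) (simp add: mult_ac)
  also have "\<dots> = (\<Sum>a\<in>{0..n}. \<Sum>s\<in>UNIV. \<Sum>r\<in>UNIV. \<Sum>b\<in>{0..n}.
            (h (cl n a) (cl n b) r s * x1^a * T n x4 s * T n x3 r) * x2^b)"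
    by (intro sum.cong refl, subst sum.swap, subst (2) sum.swap, rule refl)
  also have "\<dots> = (\<Sum>a\<in>{0..n}. \<Sum>s\<in>UNIV. \<Sum>r\<in>UNIV. \<Sum>q\<in>UNIV.
            (h (cl n a) q r s * T n x4 s * T n x3 r * T n x2 q) * x1^a)"
    by (intro sum.cong refl, subst one_dimT[OF assms]) (simp add: mult_ac)
  also have "\<dots> = (\<Sum>s\<in>UNIV. \<Sum>r\<in>UNIV. \<Sum>q\<in>UNIV. \<Sum>a\<in>{0..n}.
            (h (cl n a) q r s * T n x4 s * T n x3 r * T n x2 q) * x1^a)"
    by (simp add: sum_cls sum.distrib)
  also have "\<dots> = (\<Sum>s\<in>UNIV. \<Sum>r\<in>UNIV. \<Sum>q\<in>UNIV. \<Sum>p\<in>UNIV.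
            h p q r s * T n x4 s * T n x3 r * T n x2 q * T n x1 p)"
    by (intro sum.cong refl, subst one_dimT[OF assms]) (simp add: mult_ac)
  also have "\<dots> = (\<Sum>p\<in>UNIV. \<Sum>q\<in>UNIV. \<Sum>r\<in>UNIV. \<Sum>s\<in>UNIV.
            h p q r s * (T n x1 p * T n x2 q * T n x3 r * T n x4 s))"
    by (simp add: sum_cls algebra_simps)
  finally show ?thesis .
qed

lemma num4_simps: "(2::4) \<noteq> 1" "(3::4) \<noteq> 1" "(4::4) \<noteq> 1" "(3::4) \<noteq> 2" "(4::4) \<noteq> 2" "(4::4) \<noteq> 3"
   "(1::4) \<noteq> 2" "(1::4) \<noteq> 3" "(1::4) \<noteq> 4" "(2::4) \<noteq> 3" "(2::4) \<noteq> 4" "(3::4) \<noteq> 4"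
  by simp_all

lemma Hstar_iff:
  "k \<in> Hstar m \<longleftrightarrow> k$1+k$2+k$3+k$4 = 0 \<and> (\<forall>i. 4 dvd (k$i - k$1)) \<and> (\<forall>i j. k$i - k$j \<le> 4 * int m)"
proof -
  have A: "(\<forall>i j. (k$i - k$j) mod 4 = 0) \<longleftrightarrow> (\<forall>i. 4 dvd (k$i - k$1))"
  proof
    assume "\<forall>i j. (k$i - k$j) mod 4 = 0" then show "\<forall>i. 4 dvd (k$i - k$1)" by auto
  next
    assume h: "\<forall>i. 4 dvd (k$i - k$1)"
    show "\<forall>i j. (k$i - k$j) mod 4 = 0"
    proof (intro allI)
      fix i j
      have "4 dvd ((k$i - k$1) - (k$j - k$1))" using h by (metis dvd_diff)
      then show "(k$i - k$j) mod 4 = 0" by simp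
    qed
  qed
  have B: "(\<forall>i j. i < j \<longrightarrow> - 4 * int m \<le> k$i - k$j \<and> k$i - k$j \<le> 4 * int m) \<longleftrightarrow> (\<forall>i j. k$i - k$j \<le> 4 * int m)"
  proof
    assume h: "\<forall>i j. i < j \<longrightarrow> - 4 * int m \<le> k$i - k$j \<and> k$i - k$j \<le> 4 * int m"
    show "\<forall>i j. k$i - k$j \<le> 4 * int m"
    proof (intro allI)
      fix i j :: 4
      consider "i < j" | "i = j" | "j < i" by fastforce
      then show "k$i - k$j \<le> 4 * int m" using h[rule_format, of i j] h[rule_format, of j i] by cases auto
    qed
  next
    assume h: "\<forall>i j. k$i - k$j \<le> 4 * int m"
    then show "\<forall>i j. i < j \<longrightarrow> - 4 * int m \<le> k$i - k$j \<and> k$i - k$j \<le> 4 * int m"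
    proof (intro allI impI conjI)
      fix i j :: 4
      show "k$i - k$j \<le> 4 * int m" using h by auto
      show "- 4 * int m \<le> k$i - k$j" using h[rule_format, of j i] by linarith
    qed
  qed
  show ?thesis unfolding Hstar_def HH_def ZH_def using A B by (auto simp: sum_4 add_ac)
qed

definition sel4 :: "'a \<Rightarrow> 'a \<Rightarrow> 'a \<Rightarrow> 'a \<Rightarrow> 4 \<Rightarrow> 'a" where
  "sel4 a b c d i = (if i = 1 then a else if i = 2 then b else if i = 3 then c else d)"

lemma sel4_simps[simp]: "sel4 a b c d 1 = a" "sel4 a b c d 2 = b" "sel4 a b c d 3 = c" "sel4 a b c d 4 = d"
  by (simp_all add: sel4_def)

definition kap :: "nat \<Rightarrow> nat \<Rightarrow> nat \<Rightarrow> nat \<Rightarrow> int^4" where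
  "kap a b c d = (\<chi> i. 4 * int (sel4 a b c d i) - int (a+b+c+d))"

lemma kap_nth: "kap a b c d $ i = 4 * int (sel4 a b c d i) - int (a+b+c+d)"
  by (simp add: kap_def)

lemma kap_simps[simp]: "kap a b c d $ 1 = 4 * int a - int (a+b+c+d)"
  "kap a b c d $ 2 = 4 * int b - int (a+b+c+d)"
  "kap a b c d $ 3 = 4 * int c - int (a+b+c+d)"
  "kap a b c d $ 4 = 4 * int d - int (a+b+c+d)"
  by (simp_all add: kap_nth)

lemma all4: "(\<forall>i::4. P i) \<longleftrightarrow> P 1 \<and> P 2 \<and> P 3 \<and> P 4" by (rule forall_4)

definition Abox :: "nat \<Rightarrow> (nat \<times> nat \<times> nat \<times> nat) set" where
  "Abox m = {(a,b,c,d). a \<le> m \<and> b \<le> m \<and> c \<le> m \<and> d \<le> m \<and> (a=0 \<or> b=0 \<or> c=0 \<or> d=0)}"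

definition invk :: "int^4 \<Rightarrow> nat \<times> nat \<times> nat \<times> nat" where
  "invk k = (let f2 = (k$2 - k$1) div 4; f3 = (k$3 - k$1) div 4; f4 = (k$4 - k$1) div 4;
                 mf = min (min 0 f2) (min f3 f4)
             in (nat (- mf), nat (f2 - mf), nat (f3 - mf), nat (f4 - mf)))"

lemma kap_bij: "bij_betw (\<lambda>(a,b,c,d). kap a b c d) (Abox m) (Hstar m)"
proof (rule bij_betw_byWitness[where f' = invk])
  show "\<forall>x\<in>Abox m. invk (case x of (a, b, c, d) \<Rightarrow> kap a b c d) = x"
  proof
    fix x assume "x \<in> Abox m"
    then obtain a b c d where x: "x = (a,b,c,d)" and h: "a \<le> m" "b \<le> m" "c \<le> m" "d \<le> m" "a=0 \<or> b=0 \<or> c=0 \<or> d=0"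
      unfolding Abox_def by auto
    have e2: "(4 * int b - int (a+b+c+d) - (4 * int a - int (a+b+c+d))) div 4 = int b - int a" by simp
    have e3: "(4 * int c - int (a+b+c+d) - (4 * int a - int (a+b+c+d))) div 4 = int c - int a" by simp
    have e4: "(4 * int d - int (a+b+c+d) - (4 * int a - int (a+b+c+d))) div 4 = int d - int a" by simp
    show "invk (case x of (a, b, c, d) \<Rightarrow> kap a b c d) = x"
      unfolding x invk_def Let_def using h by (simp only: kap_simps e2 e3 e4 prod.case) auto
  qed
  show "\<forall>k\<in>Hstar m. (case invk k of (a, b, c, d) \<Rightarrow> kap a b c d) = k"
  proof
    fix k assume k: "k \<in> Hstar m"
    then have s: "k$1+k$2+k$3+k$4 = 0" and dv: "\<forall>i. 4 dvd (k$i - k$1)" by (auto simp: Hstar_iff)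
    define f2 where "f2 = (k$2 - k$1) div 4"
    define f3 where "f3 = (k$3 - k$1) div 4"
    define f4 where "f4 = (k$4 - k$1) div 4"
    have k2: "k$2 = k$1 + 4*f2" using dv[rule_format, of 2] unfolding f2_def by auto
    have k3: "k$3 = k$1 + 4*f3" using dv[rule_format, of 3] unfolding f3_def by auto
    have k4: "k$4 = k$1 + 4*f4" using dv[rule_format, of 4] unfolding f4_def by auto
    define mf where "mf = min (min 0 f2) (min f3 f4)"
    have iv: "invk k = (nat (- mf), nat (f2 - mf), nat (f3 - mf), nat (f4 - mf))"
      unfolding invk_def Let_def f2_def f3_def f4_def mf_def by simp
    have m0: "mf \<le> 0" "mf \<le> f2" "mf \<le> f3" "mf \<le> f4" unfolding mf_def by auto
    show "(case invk k of (a, b, c, d) \<Rightarrow> kap a b c d) = k"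
      unfolding iv prod.case vec_eq_iff all4 using m0 s k2 k3 k4 by (simp add: algebra_simps)
  qed
  show "(\<lambda>(a, b, c, d). kap a b c d) ` Abox m \<subseteq> Hstar m"
  proof
    fix k assume "k \<in> (\<lambda>(a, b, c, d). kap a b c d) ` Abox m"
    then obtain a b c d where k: "k = kap a b c d" and h: "a \<le> m" "b \<le> m" "c \<le> m" "d \<le> m"
      unfolding Abox_def by auto
    have "\<forall>i. 4 dvd (k$i - k$1)" unfolding all4 k by simp
    moreover have "\<forall>i j. k$i - k$j \<le> 4 * int m" unfolding all4 k using h by simp
    ultimately show "k \<in> Hstar m" unfolding Hstar_iff k by simp
  qed
  show "invk ` Hstar m \<subseteq> Abox m"
  proof
    fix x assume "x \<in> invk ` Hstar m"
    then obtain k where x: "x = invk k" and k: "k \<in> Hstar m" by auto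
    then have s: "k$1+k$2+k$3+k$4 = 0" and dv: "\<forall>i. 4 dvd (k$i - k$1)" and bd: "\<forall>i j. k$i - k$j \<le> 4 * int m" by (auto simp: Hstar_iff)
    define f2 where "f2 = (k$2 - k$1) div 4"
    define f3 where "f3 = (k$3 - k$1) div 4"
    define f4 where "f4 = (k$4 - k$1) div 4"
    have k2: "k$2 = k$1 + 4*f2" using dv[rule_format, of 2] unfolding f2_def by auto
    have k3: "k$3 = k$1 + 4*f3" using dv[rule_format, of 3] unfolding f3_def by auto
    have k4: "k$4 = k$1 + 4*f4" using dv[rule_format, of 4] unfolding f4_def by auto
    define mf where "mf = min (min 0 f2) (min f3 f4)"
    have iv: "invk k = (nat (- mf), nat (f2 - mf), nat (f3 - mf), nat (f4 - mf))"
      unfolding invk_def Let_def f2_def f3_def f4_def mf_def by simp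
    have b: "\<bar>f2\<bar> \<le> int m" "\<bar>f3\<bar> \<le> int m" "\<bar>f4\<bar> \<le> int m" "\<bar>f2 - f3\<bar> \<le> int m" "\<bar>f2 - f4\<bar> \<le> int m" "\<bar>f3 - f4\<bar> \<le> int m"
      using bd[rule_format, of 1 2] bd[rule_format, of 2 1] bd[rule_format, of 1 3] bd[rule_format, of 3 1]
        bd[rule_format, of 1 4] bd[rule_format, of 4 1] bd[rule_format, of 2 3] bd[rule_format, of 3 2]
        bd[rule_format, of 2 4] bd[rule_format, of 4 2] bd[rule_format, of 3 4] bd[rule_format, of 4 3]
      unfolding k2 k3 k4 by auto
    show "x \<in> Abox m" unfolding x iv Abox_def mf_def using b by (auto simp: min_def split: if_splits)
  qed
qed

lemma hstar_sum:
  "(\<Sum>k\<in>Hstar m. F k) = (\<Sum>a\<in>{0..m}. \<Sum>b\<in>{0..m}. \<Sum>c\<in>{0..m}. \<Sum>d\<in>{0..m}.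
       if a=0 \<or> b=0 \<or> c=0 \<or> d=0 then F (kap a b c d) else 0)"
proof -
  have "(\<Sum>k\<in>Hstar m. F k) = (\<Sum>x\<in>Abox m. F (case x of (a,b,c,d) \<Rightarrow> kap a b c d))"
    using sum.reindex_bij_betw[OF kap_bij[of m], of F] by simp
  also have "Abox m = {x\<in>{0..m}\<times>{0..m}\<times>{0..m}\<times>{0..m}. case x of (a,b,c,d) \<Rightarrow> a=0 \<or> b=0 \<or> c=0 \<or> d=0}"
    unfolding Abox_def by auto
  also have "(\<Sum>x\<in>\<dots>. F (case x of (a,b,c,d) \<Rightarrow> kap a b c d)) =
     (\<Sum>x\<in>{0..m}\<times>{0..m}\<times>{0..m}\<times>{0..m}. case x of (a,b,c,d) \<Rightarrow> if a=0 \<or> b=0 \<or> c=0 \<or> d=0 then F (kap a b c d) else 0)"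
    by (subst sum.inter_filter) (auto intro!: sum.cong)
  also have "\<dots> = (\<Sum>a\<in>{0..m}. \<Sum>b\<in>{0..m}. \<Sum>c\<in>{0..m}. \<Sum>d\<in>{0..m}.
       if a=0 \<or> b=0 \<or> c=0 \<or> d=0 then F (kap a b c d) else 0)"
    by (simp add: sum.cartesian_product[symmetric])
  finally show ?thesis .
qed

lemma card4: "card {i::4. P i} = (if P 1 then 1 else 0) + (if P 2 then 1 else 0) + (if P 3 then 1 else 0) + (if P 4 then 1 else 0)"
proof -
  have "card {i::4. P i} = (\<Sum>i\<in>{i\<in>UNIV. P i}. 1)" by (simp only: card_eq_sum mem_Collect_eq UNIV_I simp_thms)
  also have "\<dots> = (\<Sum>i\<in>UNIV. if P i then 1 else 0)" by (rule sum.inter_filter) (rule finite)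
  also have "\<dots> = (if P 1 then 1 else 0) + (if P 2 then 1 else 0) + (if P 3 then 1 else 0) + (if P 4 then 1 else 0)"
    by (rule sum_4)
  finally show ?thesis .
qed

lemma range4: "range (f :: 4 \<Rightarrow> 'a) = {f 1, f 2, f 3, f 4}"
  by (simp add: UNIV_4)
lemma Max4: "Max {a,b,c,d::'a::linorder} = max a (max b (max c d))" by simp
lemma Min4: "Min {a,b,c,d::'a::linorder} = min a (min b (min c d))" by simp
lemma max_aux: "max (4 * int x - s) (4 * int y - s) = 4 * int (max x y) - s" by (simp add: max_def)
lemma min_aux: "min (4 * int x - s) (4 * int y - s) = 4 * int (min x y) - s" by (simp add: min_def)

definition cnt :: "cls \<Rightarrow> cls \<Rightarrow> cls \<Rightarrow> cls \<Rightarrow> cls \<Rightarrow> nat" where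
  "cnt u p q r s = (if p = u then 1 else 0) + (if q = u then 1 else 0) + (if r = u then 1 else 0) + (if s = u then 1 else 0)"

definition wt :: "cls \<Rightarrow> cls \<Rightarrow> cls \<Rightarrow> cls \<Rightarrow> real" where
  "wt p q r s = (if cnt Zc p q r s = 0 then 0 else if cnt Nc p q r s = 0 then 1
      else 1 / real ((cnt Nc p q r s + cnt Zc p q r s) choose cnt Nc p q r s))"

lemma cl_eqs: "n \<ge> 1 \<Longrightarrow> (cl n x = Zc \<longleftrightarrow> x = 0) \<and> (cl n x = Nc \<longleftrightarrow> x = n)"
  by (auto simp: cl_def)

lemma ccoef_kap:
  assumes n: "n \<ge> 1" and h: "a \<le> n" "b \<le> n" "c \<le> n" "d \<le> n" "a=0 \<or> b=0 \<or> c=0 \<or> d=0"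
  shows "ccoef n (kap a b c d) = wt (cl n a) (cl n b) (cl n c) (cl n d)"
proof -
  define M where "M = max (max a b) (max c d)"
  define s where "s = int (a+b+c+d)"
  have cmx: "cmax (kap a b c d) = 4 * int M - s"
    unfolding cmax_def range4 Max4 kap_simps M_def s_def
    by (simp only: max_aux max.assoc)
  have "min a (min b (min c d)) = 0" using h(5) by auto
  then have cmn: "cmin (kap a b c d) = - s"
    unfolding cmin_def range4 Min4 kap_simps s_def by (simp only: min_aux)
  have p: "card {i. kap a b c d $ i = cmax (kap a b c d)} = card {i. sel4 a b c d i = M}"
    unfolding cmx by (rule arg_cong[where f=card]) (auto simp: kap_nth s_def)
  have q: "card {i. kap a b c d $ i = cmin (kap a b c d)} = card {i. sel4 a b c d i = 0}"
    unfolding cmn by (rule arg_cong[where f=card]) (auto simp: kap_nth s_def)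
  have cN: "cnt Nc (cl n a) (cl n b) (cl n c) (cl n d) = (if a = n then 1 else 0) + (if b = n then 1 else 0) + (if c = n then 1 else 0) + (if d = n then 1 else 0)"
    unfolding cnt_def using cl_eqs[OF n] by presburger
  have cZ: "cnt Zc (cl n a) (cl n b) (cl n c) (cl n d) = (if a = 0 then 1 else 0) + (if b = 0 then 1 else 0) + (if c = 0 then 1 else 0) + (if d = 0 then 1 else 0)"
    unfolding cnt_def using cl_eqs[OF n] by presburger
  have MZ: "cnt Zc (cl n a) (cl n b) (cl n c) (cl n d) \<noteq> 0"
    unfolding cZ using h(5) by auto
  have aM: "a \<le> M" "b \<le> M" "c \<le> M" "d \<le> M" unfolding M_def by auto
  show ?thesis
  proof (cases "M < n")
    case True
    then have "cnt Nc (cl n a) (cl n b) (cl n c) (cl n d) = 0"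
      unfolding cN using aM by auto
    moreover have "cmax (kap a b c d) - cmin (kap a b c d) < 4 * int n" using True cmx cmn by simp
    ultimately show ?thesis using MZ unfolding ccoef_def wt_def by simp
  next
    case False
    have "M \<le> n" unfolding M_def using h by simp
    then have Mn: "M = n" using False by linarith
    have some: "a = n \<or> b = n \<or> c = n \<or> d = n" using Mn unfolding M_def by (metis max_def)
    have "\<not> cmax (kap a b c d) - cmin (kap a b c d) < 4 * int n" using Mn cmx cmn by simp
    moreover have "cnt Nc (cl n a) (cl n b) (cl n c) (cl n d) = card {i. sel4 a b c d i = M}"
      unfolding card4 Mn cN by simp
    moreover have "cnt Zc (cl n a) (cl n b) (cl n c) (cl n d) = card {i. sel4 a b c d i = 0}"
      unfolding card4 cZ by simp
    moreover have "card {i. sel4 a b c d i = M} \<noteq> 0"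
      unfolding card4 Mn using some by auto
    ultimately show ?thesis using MZ p q unfolding ccoef_def wt_def Let_def by simp
  qed
qed

definition E :: "real \<Rightarrow> complex" where "E x = exp (2 * of_real pi * \<i> * of_real x)"

lemma phi_kap:
  assumes t: "t \<in> RH"
  shows "phi (kap a b c d) t = E (t$1) ^ a * E (t$2) ^ b * E (t$3) ^ c * E (t$4) ^ d"
proof -
  have st: "t$1 + t$2 + t$3 + t$4 = 0" using t unfolding RH_def by (simp add: sum_4)
  have "(\<Sum>i\<in>UNIV. real_of_int (kap a b c d $ i) * t$i) = 4 * (a * t$1 + b * t$2 + c * t$3 + d * t$4)"
  proof -
    have "(\<Sum>i\<in>UNIV. real_of_int (kap a b c d $ i) * t$i) = 4 * (a * t$1 + b * t$2 + c * t$3 + d * t$4)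
           - real (a+b+c+d) * (t$1 + t$2 + t$3 + t$4)"
      unfolding sum_4 kap_simps by (simp add: algebra_simps)
    then show ?thesis using st by simp
  qed
  then have h: "pi / 2 * (\<Sum>i\<in>UNIV. real_of_int (kap a b c d $ i) * t$i) = 2 * pi * (a * t$1 + b * t$2 + c * t$3 + d * t$4)"
    by simp
  have "phi (kap a b c d) t = exp (\<i> * complex_of_real (2 * pi * (a * t$1 + b * t$2 + c * t$3 + d * t$4)))"
    unfolding phi_def h by simp
  also have "\<dots> = exp (of_nat a * (2 * of_real pi * \<i> * of_real (t$1)) + of_nat b * (2 * of_real pi * \<i> * of_real (t$2))
      + of_nat c * (2 * of_real pi * \<i> * of_real (t$3)) + of_nat d * (2 * of_real pi * \<i> * of_real (t$4)))"
    by (rule arg_cong[where f=exp]) (simp add: algebra_simps)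
  also have "\<dots> = E (t$1) ^ a * E (t$2) ^ b * E (t$3) ^ c * E (t$4) ^ d"
    unfolding E_def by (simp only: exp_add exp_of_nat_mult)
  finally show ?thesis .
qed

definition hz :: "cls \<Rightarrow> cls \<Rightarrow> cls \<Rightarrow> cls \<Rightarrow> bool" where
  "hz p q r s = (p = Zc \<or> q = Zc \<or> r = Zc \<or> s = Zc)"

lemma main_expand:
  fixes g :: "int^4 \<Rightarrow> complex"
  assumes n: "n \<ge> 1" and t: "t \<in> RH"
    and g: "\<And>a b c d. a \<le> n \<Longrightarrow> b \<le> n \<Longrightarrow> c \<le> n \<Longrightarrow> d \<le> n \<Longrightarrow> (a=0\<or>b=0\<or>c=0\<or>d=0) \<Longrightarrow>
               g (kap a b c d) = hw (cl n a) (cl n b) (cl n c) (cl n d)"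
  shows "(\<Sum>k\<in>Hstar n. g k * phi k t) = (\<Sum>p\<in>UNIV. \<Sum>q\<in>UNIV. \<Sum>r\<in>UNIV. \<Sum>s\<in>UNIV.
            (if hz p q r s then hw p q r s else 0) *
            (T n (E (t$1)) p * T n (E (t$2)) q * T n (E (t$3)) r * T n (E (t$4)) s))"
proof -
  have "(\<Sum>k\<in>Hstar n. g k * phi k t) = (\<Sum>a\<in>{0..n}. \<Sum>b\<in>{0..n}. \<Sum>c\<in>{0..n}. \<Sum>d\<in>{0..n}.
       if a=0 \<or> b=0 \<or> c=0 \<or> d=0 then g (kap a b c d) * phi (kap a b c d) t else 0)"
    by (rule hstar_sum[of "\<lambda>k. g k * phi k t"])
  also have "\<dots> = (\<Sum>a\<in>{0..n}. \<Sum>b\<in>{0..n}. \<Sum>c\<in>{0..n}. \<Sum>d\<in>{0..n}.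
       (\<lambda>p q r s. if hz p q r s then hw p q r s else 0) (cl n a) (cl n b) (cl n c) (cl n d) *
         (E (t$1) ^ a * E (t$2) ^ b * E (t$3) ^ c * E (t$4) ^ d))"
  proof (intro sum.cong refl)
    fix a b c d assume "a \<in> {0..n}" "b \<in> {0..n}" "c \<in> {0..n}" "d \<in> {0..n}"
    then have h: "a \<le> n" "b \<le> n" "c \<le> n" "d \<le> n" by auto
    have e: "hz (cl n a) (cl n b) (cl n c) (cl n d) \<longleftrightarrow> (a=0\<or>b=0\<or>c=0\<or>d=0)"
      unfolding hz_def by (simp add: cl_eqs[OF n])
    show "(if a=0 \<or> b=0 \<or> c=0 \<or> d=0 then g (kap a b c d) * phi (kap a b c d) t else 0) =
       (\<lambda>p q r s. if hz p q r s then hw p q r s else 0) (cl n a) (cl n b) (cl n c) (cl n d) *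
         (E (t$1) ^ a * E (t$2) ^ b * E (t$3) ^ c * E (t$4) ^ d)"
      unfolding e using g[OF h] phi_kap[OF t] by simp
  qed
  also have "\<dots> = (\<Sum>p\<in>UNIV. \<Sum>q\<in>UNIV. \<Sum>r\<in>UNIV. \<Sum>s\<in>UNIV.
            (if hz p q r s then hw p q r s else 0) *
            (T n (E (t$1)) p * T n (E (t$2)) q * T n (E (t$3)) r * T n (E (t$4)) s))"
    by (rule pattern_sum[OF n, of "\<lambda>p q r s. if hz p q r s then hw p q r s else 0"])
  finally show ?thesis .
qed

fun V :: "complex \<Rightarrow> complex \<Rightarrow> cls \<Rightarrow> complex" where
  "V u z Zc = 1" | "V u z Mc = u" | "V u z Nc = z"

definition Wf :: "complex \<Rightarrow> complex \<Rightarrow> complex \<Rightarrow> complex \<Rightarrow> complex \<Rightarrow> complex" where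
  "Wf z u1 u2 u3 u4 = (\<Sum>p\<in>UNIV. \<Sum>q\<in>UNIV. \<Sum>r\<in>UNIV. \<Sum>s\<in>UNIV.
      complex_of_real (wt p q r s) * (V u1 z p * V u2 z q * V u3 z r * V u4 z s))"

lemma Wf_expand: "Wf z u1 u2 u3 u4 = 1 + z + z^2 + z^3 + (1 + z + z^2) * (u1 + u2 + u3 + u4)
   + (1 + z) * (u1*u2 + u1*u3 + u1*u4 + u2*u3 + u2*u4 + u3*u4) + (u1*u2*u3 + u1*u2*u4 + u1*u3*u4 + u2*u3*u4)"
  unfolding Wf_def sum_cls
  by (simp add: wt_def cnt_def eval_nat_numeral) (simp add: algebra_simps power2_eq_square power3_eq_cube)

lemma Wf_id1: "(1 - z) * Wf z u1 u2 u3 u4 = (1+u1)*(1+u2)*(1+u3)*(1+u4) - (z+u1)*(z+u2)*(z+u3)*(z+u4)"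
  unfolding Wf_expand by (simp add: algebra_simps power2_eq_square power3_eq_cube)

lemma Wf_id2: "Wf 1 u1 u2 u3 u4 = (1+u2)*(1+u3)*(1+u4) + (1+u1)*(1+u3)*(1+u4) + (1+u1)*(1+u2)*(1+u4) + (1+u1)*(1+u2)*(1+u3)"
  unfolding Wf_expand by (simp add: algebra_simps)

lemma T_simps: "T n x Zc = 1" "T n x Nc = x ^ n" by (simp_all add: T_def)

lemma Phistar_RH:
  assumes n: "n \<ge> 1" and t: "t \<in> RH"
  shows "Phistar n t = complex_of_real (1 / (4 * real n ^ 3)) *
     (\<Sum>p\<in>UNIV. \<Sum>q\<in>UNIV. \<Sum>r\<in>UNIV. \<Sum>s\<in>UNIV. complex_of_real (wt p q r s) *
            (T n (E (t$1)) p * T n (E (t$2)) q * T n (E (t$3)) r * T n (E (t$4)) s))"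
proof -
  have "(\<Sum>k\<in>Hstar n. complex_of_real (ccoef n k) * phi k t) = (\<Sum>p\<in>UNIV. \<Sum>q\<in>UNIV. \<Sum>r\<in>UNIV. \<Sum>s\<in>UNIV.
            (if hz p q r s then complex_of_real (wt p q r s) else 0) *
            (T n (E (t$1)) p * T n (E (t$2)) q * T n (E (t$3)) r * T n (E (t$4)) s))"
    by (rule main_expand[OF n t, of "\<lambda>k. complex_of_real (ccoef n k)" "\<lambda>p q r s. complex_of_real (wt p q r s)"])
       (simp add: ccoef_kap[OF n])
  also have "\<dots> = (\<Sum>p\<in>UNIV. \<Sum>q\<in>UNIV. \<Sum>r\<in>UNIV. \<Sum>s\<in>UNIV. complex_of_real (wt p q r s) *
            (T n (E (t$1)) p * T n (E (t$2)) q * T n (E (t$3)) r * T n (E (t$4)) s))"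
  proof (intro sum.cong refl)
    fix p q r s
    have "\<not> hz p q r s \<Longrightarrow> wt p q r s = 0" unfolding hz_def wt_def cnt_def by auto
    then show "(if hz p q r s then complex_of_real (wt p q r s) else 0) *
            (T n (E (t$1)) p * T n (E (t$2)) q * T n (E (t$3)) r * T n (E (t$4)) s) =
          complex_of_real (wt p q r s) *
            (T n (E (t$1)) p * T n (E (t$2)) q * T n (E (t$3)) r * T n (E (t$4)) s)" by auto
  qed
  finally show ?thesis unfolding Phistar_def by simp
qed

lemma E_add: "E (x + y) = E x * E y"
  unfolding E_def by (simp add: algebra_simps exp_add[symmetric])

lemma E_pow: "E x ^ m = E (real m * x)"
  unfolding E_def by (simp add: exp_of_nat_mult[symmetric] algebra_simps)

lemma E_int: "E (real_of_int m) = 1"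
  unfolding E_def using exp_2pi_1_int[of m] by (simp add: algebra_simps)

lemma E_eq_1: "E x = 1 \<longleftrightarrow> (\<exists>m::int. x = of_int m)"
proof
  assume "E x = 1"
  then obtain m :: int where "2 * pi * x = real_of_int (2 * m) * pi"
    unfolding E_def exp_eq_1 by auto
  then have "x = of_int m" by simp
  then show "\<exists>m::int. x = of_int m" by blast
next
  assume "\<exists>m::int. x = of_int m" then show "E x = 1" using E_int by auto
qed

lemma E_zero: "E 0 = 1" unfolding E_def by simp

lemma geo:
  fixes x :: complex
  assumes n: "n \<ge> 1"
  shows "(x - 1) * (1 + T n x Mc) = x^n - 1" and "x * (1 + T n x Mc) = T n x Mc + x^n"
proof -
  have e: "{..<n} = insert 0 {1..<n}" using n by auto
  have s: "1 + T n x Mc = (\<Sum>i<n. x^i)" unfolding T_def e by simp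
  show 1: "(x - 1) * (1 + T n x Mc) = x^n - 1" unfolding s by (rule power_diff_1_eq[symmetric])
  have "x * (1 + T n x Mc) = (x - 1) * (1 + T n x Mc) + (1 + T n x Mc)" by (simp add: algebra_simps)
  then show "x * (1 + T n x Mc) = T n x Mc + x^n" unfolding 1 by simp
qed

lemma T_one: "T n 1 Mc = of_nat (n - 1)" unfolding T_def by simp

lemma Phi_grid:
  assumes n: "n \<ge> 1" and sd: "d$1 + d$2 + d$3 + d$4 = 0" and dv: "\<forall>i. 4 dvd (d$i - d$1)"
  shows "Phistar n (grid n d) = (if \<forall>i. 4 * int n dvd d$i then 1 else 0)"
proof -
  define t where "t = grid n d"
  have tn: "t$i = real_of_int (d$i) / (4 * real n)" for i unfolding t_def grid_def by simp
  have "t$1+t$2+t$3+t$4 = real_of_int (d$1+d$2+d$3+d$4) / (4*real n)"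
    unfolding tn by (simp add: add_divide_distrib)
  then have tRH: "t \<in> RH" unfolding RH_def sum_4 using sd by simp
  define x1 where "x1 = E (t$1)"
  define x2 where "x2 = E (t$2)"
  define x3 where "x3 = E (t$3)"
  define x4 where "x4 = E (t$4)"
  define z where "z = x1 ^ n"
  have xn: "E (t$i) ^ n = E (real_of_int (d$i) / 4)" for i
    unfolding E_pow tn using n by simp
  have zi: "E (t$i) ^ n = z" for i
  proof -
    obtain e where e: "d$i - d$1 = 4 * e" using dv by blast
    have "d$i = d$1 + 4*e" using e by simp
    then have "real_of_int (d$i) = real_of_int (d$1) + 4 * real_of_int e" by simp
    then have h: "real_of_int (d$i) / 4 = real_of_int (d$1) / 4 + real_of_int e" by simp
    show ?thesis unfolding z_def x1_def xn h by (simp only: E_add E_int mult_1_right)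
  qed
  have prodx: "x1 * x2 * x3 * x4 = 1"
  proof -
    have "t$1 + t$2 + t$3 + t$4 = 0" using tRH unfolding RH_def sum_4 by simp
    then have "E (t$1 + t$2 + t$3 + t$4) = 1" by (simp add: E_zero)
    then show ?thesis unfolding x1_def x2_def x3_def x4_def E_add .
  qed
  define u1 where "u1 = T n x1 Mc"
  define u2 where "u2 = T n x2 Mc"
  define u3 where "u3 = T n x3 Mc"
  define u4 where "u4 = T n x4 Mc"
  have TV: "T n (E (t$1)) p = V u1 z p" "T n (E (t$2)) p = V u2 z p" "T n (E (t$3)) p = V u3 z p" "T n (E (t$4)) p = V u4 z p" for p
    unfolding u1_def u2_def u3_def u4_def x1_def x2_def x3_def x4_def
    by (cases p; simp add: T_simps zi)+
  have Ph: "Phistar n t = complex_of_real (1 / (4 * real n ^ 3)) * Wf z u1 u2 u3 u4"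
    unfolding Phistar_RH[OF n tRH] TV Wf_def ..
  have xz: "x1 ^ n = z" "x2 ^ n = z" "x3 ^ n = z" "x4 ^ n = z"
    unfolding x1_def x2_def x3_def x4_def zi by simp_all
  have g1: "(x1 - 1) * (1 + u1) = z - 1" "(x2 - 1) * (1 + u2) = z - 1"
           "(x3 - 1) * (1 + u3) = z - 1" "(x4 - 1) * (1 + u4) = z - 1"
    unfolding u1_def u2_def u3_def u4_def using geo(1)[OF n] xz by auto
  have g2: "z + u1 = x1 * (1 + u1)" "z + u2 = x2 * (1 + u2)" "z + u3 = x3 * (1 + u3)" "z + u4 = x4 * (1 + u4)"
    unfolding u1_def u2_def u3_def u4_def using geo(2)[OF n] xz by (auto simp: add.commute)
  have xi1: "E (t$i) = 1 \<longleftrightarrow> 4 * int n dvd d$i" for i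
  proof
    assume "E (t$i) = 1"
    then obtain m :: int where "real_of_int (d$i) / (4 * real n) = of_int m" unfolding E_eq_1 tn by blast
    then have "real_of_int (d$i) = of_int m * (4 * real n)" using n by (simp add: field_simps)
    then have "real_of_int (d$i) = real_of_int (m * (4 * int n))" by simp
    then have "d$i = m * (4 * int n)" by (simp only: of_int_eq_iff)
    then show "4 * int n dvd d$i" by simp
  next
    assume "4 * int n dvd d$i"
    then obtain m where "d$i = 4 * int n * m" by blast
    then have "real_of_int (d$i) / (4 * real n) = of_int m" using n by simp
    then show "E (t$i) = 1" unfolding tn E_eq_1 by blast
  qed
  have all: "(\<forall>i. 4 * int n dvd d$i) \<longleftrightarrow> x1 = 1 \<and> x2 = 1 \<and> x3 = 1 \<and> x4 = 1"
    unfolding all4 x1_def x2_def x3_def x4_def xi1 ..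
  show ?thesis
  proof (cases "z = 1")
    case False
    have "(1 - z) * Wf z u1 u2 u3 u4 = 0"
      unfolding Wf_id1 g2 using prodx by (simp add: algebra_simps)
    then have "Wf z u1 u2 u3 u4 = 0" using False by simp
    moreover have "\<not> x1 = 1" using False xz by auto
    ultimately show ?thesis unfolding t_def[symmetric] Ph all by simp
  next
    case True
    have W: "Wf z u1 u2 u3 u4 = (1+u2)*(1+u3)*(1+u4) + (1+u1)*(1+u3)*(1+u4) + (1+u1)*(1+u2)*(1+u4) + (1+u1)*(1+u2)*(1+u3)"
      unfolding True Wf_id2 ..
    have c: "x1 = 1 \<or> 1 + u1 = 0" "x2 = 1 \<or> 1 + u2 = 0" "x3 = 1 \<or> 1 + u3 = 0" "x4 = 1 \<or> 1 + u4 = 0"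
      using g1 True by auto
    show ?thesis
    proof (cases "x1 = 1 \<and> x2 = 1 \<and> x3 = 1 \<and> x4 = 1")
      case True
      then have "1 + u1 = of_nat n" "1 + u2 = of_nat n" "1 + u3 = of_nat n" "1 + u4 = of_nat n"
      proof -
        have "1 + T n 1 Mc = (of_nat n :: complex)" unfolding T_one using n by (simp add: of_nat_diff)
        then show "1 + u1 = of_nat n" "1 + u2 = of_nat n" "1 + u3 = of_nat n" "1 + u4 = of_nat n"
          unfolding u1_def u2_def u3_def u4_def using True by auto
      qed
      then have "Wf z u1 u2 u3 u4 = 4 * of_nat n ^ 3" unfolding W by (simp add: power3_eq_cube)
      then show ?thesis unfolding t_def[symmetric] Ph all using True n by simp
    next
      case False
      have "Wf z u1 u2 u3 u4 = 0" unfolding W using c prodx False by auto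
      then show ?thesis unfolding t_def[symmetric] Ph all using False by simp
    qed
  qed
qed

definition ea :: "nat \<Rightarrow> real \<Rightarrow> complex" where
  "ea n x = exp (\<i> * complex_of_real (real n * pi * x))"

lemma sinq_int_case:
  assumes n: "n \<ge> 1" and k: "x = real_of_int k"
  shows "cos (real n * pi * x) * ((real n - 1) * cos ((real n - 1) * pi * x) / cos (pi * x)) = real n - 1"
proof -
  define a where "a = (real n - 1) * pi * x"
  define b where "b = pi * x"
  have sb: "sin b = 0" unfolding b_def k by (rule sin_npi_int)
  have sa: "sin a = 0"
  proof -
    have "a = pi * real_of_int (int (n - 1) * k)" unfolding a_def k using n by (simp add: of_nat_diff)
    then show ?thesis by (simp only: sin_npi_int)
  qed
  have cb: "cos b ^ 2 = 1" using sin_cos_squared_add[of b] sb by simp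
  have ca: "cos a ^ 2 = 1" using sin_cos_squared_add[of a] sa by simp
  have cn: "cos (real n * pi * x) = cos a * cos b"
  proof -
    have "real n * pi * x = a + b" unfolding a_def b_def by (simp add: algebra_simps)
    then show ?thesis by (simp add: cos_add sb)
  qed
  have cb0: "cos b \<noteq> 0" using cb by auto
  have "cos a * cos b * ((real n - 1) * cos a / cos b) = (real n - 1) * (cos a)^2"
    using cb0 by (simp add: field_simps power2_eq_square)
  then show ?thesis unfolding cn a_def[symmetric] b_def[symmetric] using ca by simp
qed

lemma sinq_lemma:
  assumes n: "n \<ge> 1"
  shows "T n (E x) Mc = ea n x * complex_of_real (sinq (real n - 1) x)"
proof (cases "sin (pi * x) = 0")
  case True
  then obtain k :: int where k: "x = real_of_int k"
    using sin_zero_iff_int2[of "pi * x"] by auto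
  have E1: "E x = 1" unfolding k by (rule E_int)
  have "ea n x = cis (real n * pi * x)" unfolding ea_def cis_conv_exp ..
  also have "\<dots> = complex_of_real (cos (real n * pi * x))"
  proof -
    have "real n * pi * x = pi * real_of_int (int n * k)" unfolding k by simp
    then have "sin (real n * pi * x) = 0" by (simp only: sin_npi_int)
    then show ?thesis by (simp add: cis.ctr complex_eq_iff)
  qed
  finally have "ea n x * complex_of_real (sinq (real n - 1) x) =
      complex_of_real (cos (real n * pi * x) * ((real n - 1) * cos ((real n - 1) * pi * x) / cos (pi * x)))"
    unfolding sinq_def using True by simp
  also have "\<dots> = complex_of_real (real n - 1)" using sinq_int_case[OF n k] by simp
  finally show ?thesis unfolding E1 T_one using n by (simp add: of_nat_diff)
next
  case False
  define m where "m = n - 1"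
  have nm: "n = m + 1" unfolding m_def using n by simp
  define \<beta> where "\<beta> = exp (\<i> * complex_of_real (pi * x))"
  define \<beta>i where "\<beta>i = exp (- (\<i> * complex_of_real (pi * x)))"
  have bb: "\<beta> * \<beta>i = 1" unfolding \<beta>_def \<beta>i_def by (simp add: exp_add[symmetric])
  have EX: "E x = \<beta>^2"
    unfolding E_def \<beta>_def by (simp add: exp_of_nat_mult[symmetric] algebra_simps)
  have ean: "ea n x = \<beta>^n"
    unfolding ea_def \<beta>_def by (simp add: exp_of_nat_mult[symmetric] algebra_simps)
  have S1: "complex_of_real (sin (pi * x)) = (\<beta> - \<beta>i) / (2 * \<i>)"
    unfolding \<beta>_def \<beta>i_def by (simp add: sin_of_real[symmetric] sin_exp_eq)
  have Sm: "complex_of_real (sin ((real n - 1) * pi * x)) = (\<beta>^m - \<beta>i^m) / (2 * \<i>)"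
  proof -
    have "(real n - 1) * pi * x = real m * (pi * x)" unfolding m_def using n by (simp add: of_nat_diff)
    then show ?thesis unfolding \<beta>_def \<beta>i_def
      by (simp add: sin_of_real[symmetric] sin_exp_eq exp_of_nat_mult[symmetric] algebra_simps)
  qed
  have s0: "complex_of_real (sin (pi * x)) \<noteq> 0" using False by simp
  have bne: "\<beta> \<noteq> \<beta>i" using s0 S1 by auto
  have b0: "\<beta> \<noteq> 0" unfolding \<beta>_def by simp
  have X1: "\<beta>^2 \<noteq> 1"
  proof
    assume "\<beta>^2 = 1"
    then have "\<beta> * \<beta> = \<beta> * \<beta>i" using bb by (simp add: power2_eq_square)
    then show False using bne b0 by simp
  qed
  define u where "u = T n (E x) Mc"
  have g: "(\<beta>^2 - 1) * (1 + u) = (\<beta>^2)^n - 1" unfolding u_def EX[symmetric] by (rule geo(1)[OF n])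
  have h1: "\<beta>^(m+1) * \<beta>i^m = \<beta>"
  proof -
    have "\<beta>^(m+1) * \<beta>i^m = \<beta> * (\<beta> * \<beta>i)^m" by (simp add: power_mult_distrib)
    then show ?thesis using bb by simp
  qed
  have key: "(\<beta>^2 - 1) * (u * (\<beta> - \<beta>i)) = (\<beta>^2 - 1) * (\<beta>^n * (\<beta>^m - \<beta>i^m))"
  proof -
    have "(\<beta>^2 - 1) * (u * (\<beta> - \<beta>i)) = ((\<beta>^2 - 1) * (1 + u) - (\<beta>^2 - 1)) * (\<beta> - \<beta>i)"
      by (simp add: algebra_simps)
    also have "\<dots> = ((\<beta>^2)^n - \<beta>^2) * (\<beta> - \<beta>i)" unfolding g by simp
    also have "\<dots> = (\<beta>^2 - 1) * (\<beta>^n * (\<beta>^m - \<beta>i^m))"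
    proof -
      have "((\<beta>^2)^n - \<beta>^2) * (\<beta> - \<beta>i) = \<beta>^(2*m+3) - \<beta>^(2*m+1) * (\<beta> * \<beta>i) - \<beta>^3 + \<beta> * (\<beta> * \<beta>i)"
      proof -
        have pm1: "\<beta>^(2*m) = \<beta>^m * \<beta>^m" by (simp only: mult_2 power_add)
        have pm: "\<beta>^(m*2) = \<beta>^m * \<beta>^m" "\<beta>^(2*m) = \<beta>^m * \<beta>^m" "(\<beta>^2)^m = \<beta>^m * \<beta>^m"
          using pm1 by (simp_all only: mult.commute[of m 2] power_mult[symmetric])
        show ?thesis unfolding nm by (simp add: algebra_simps power_add power2_eq_square power3_eq_cube pm power_mult_distrib)
      qed
      also have "\<dots> = \<beta>^(2*m+3) - \<beta>^(2*m+1) - \<beta>^3 + \<beta>" using bb by simp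
      also have "\<dots> = (\<beta>^2 - 1) * (\<beta>^(2*m+1) - \<beta>^(m+1) * \<beta>i^m)"
        unfolding h1 by (simp add: algebra_simps power_add power2_eq_square power3_eq_cube)
      also have "\<dots> = (\<beta>^2 - 1) * (\<beta>^n * (\<beta>^m - \<beta>i^m))"
      proof -
        have pm2: "\<beta>^(m*2) = \<beta>^m * \<beta>^m" by (simp only: mult.commute[of m 2] mult_2 power_add)
        show ?thesis unfolding nm by (simp add: algebra_simps power_add pm2)
      qed
      finally show ?thesis .
    qed
    finally show ?thesis .
  qed
  have "u * (\<beta> - \<beta>i) = \<beta>^n * (\<beta>^m - \<beta>i^m)" using key X1 by simp
  then have "u * complex_of_real (sin (pi * x)) = \<beta>^n * complex_of_real (sin ((real n - 1) * pi * x))"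
    unfolding S1 Sm by (simp add: field_simps)
  then have "u = \<beta>^n * complex_of_real (sin ((real n - 1) * pi * x)) / complex_of_real (sin (pi * x))"
    using s0 by (simp add: field_simps)
  then show ?thesis unfolding u_def ean sinq_def using False by simp
qed

definition PS :: "(cls \<Rightarrow> cls \<Rightarrow> cls \<Rightarrow> cls \<Rightarrow> complex) \<Rightarrow> complex \<Rightarrow> complex \<Rightarrow> complex \<Rightarrow> complex \<Rightarrow> complex \<Rightarrow> complex \<Rightarrow> complex \<Rightarrow> complex \<Rightarrow> complex" where
  "PS h y1 y2 y3 y4 u1 u2 u3 u4 = (\<Sum>p\<in>UNIV. \<Sum>q\<in>UNIV. \<Sum>r\<in>UNIV. \<Sum>s\<in>UNIV.
      h p q r s * (V u1 y1 p * V u2 y2 q * V u3 y3 r * V u4 y4 s))"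

definition noN :: "cls \<Rightarrow> cls \<Rightarrow> cls \<Rightarrow> cls \<Rightarrow> bool" where
  "noN p q r s = (p \<noteq> Nc \<and> q \<noteq> Nc \<and> r \<noteq> Nc \<and> s \<noteq> Nc)"

lemma Bid: "PS (\<lambda>p q r s. complex_of_real (wt p q r s)) y1 y2 y3 y4 u1 u2 u3 u4 =
   (PS (\<lambda>p q r s. if hz p q r s then 1 else 0) y1 y2 y3 y4 u1 u2 u3 u4
    + PS (\<lambda>p q r s. if hz p q r s then (if noN p q r s then 1 else 0) else 0) y1 y2 y3 y4 u1 u2 u3 u4) / 2
   - (1/4 * (y1 + y2 + y3 + y4) + 1/4 * (y2*y3*y4 + y1*y3*y4 + y1*y2*y4 + y1*y2*y3)
      + 1/3 * (y1*y2 + y1*y3 + y1*y4 + y2*y3 + y2*y4 + y3*y4)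
      + 1/6 * (u1 * (y2 + y3 + y4 + y3*y4 + y2*y4 + y2*y3) + u2 * (y1 + y3 + y4 + y3*y4 + y1*y4 + y1*y3)
             + u3 * (y1 + y2 + y4 + y2*y4 + y1*y4 + y1*y2) + u4 * (y1 + y2 + y3 + y2*y3 + y1*y3 + y1*y2)))"
  unfolding PS_def sum_cls
  by (simp add: wt_def cnt_def hz_def noN_def eval_nat_numeral) (simp add: field_simps)

lemma finite_Abox: "finite (Abox m)"
proof -
  have "Abox m \<subseteq> {0..m} \<times> {0..m} \<times> {0..m} \<times> {0..m}" unfolding Abox_def by auto
  then show ?thesis by (rule finite_subset) auto
qed

lemma finite_Hstar: "finite (Hstar m)"
  using bij_betw_finite[OF kap_bij[of m]] finite_Abox by simp

lemma DH_expand: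
  assumes n: "n \<ge> 1" and t: "t \<in> RH"
  shows "DH n t = (\<Sum>p\<in>UNIV. \<Sum>q\<in>UNIV. \<Sum>r\<in>UNIV. \<Sum>s\<in>UNIV.
            (if hz p q r s then 1 else 0) *
            (T n (E (t$1)) p * T n (E (t$2)) q * T n (E (t$3)) r * T n (E (t$4)) s))"
  unfolding DH_def
  using main_expand[OF n t, of "\<lambda>k. 1" "\<lambda>p q r s. 1"] by simp

lemma Hstar_mono: "Hstar (n - 1) \<subseteq> Hstar n"
proof
  fix k assume k: "k \<in> Hstar (n - 1)"
  have le: "4 * int (n - 1) \<le> 4 * int n" by simp
  from k show "k \<in> Hstar n" unfolding Hstar_iff using order_trans[OF _ le] by blast
qed

lemma DH1_expand:
  assumes n: "n \<ge> 1" and t: "t \<in> RH"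
  shows "DH (n - 1) t = (\<Sum>p\<in>UNIV. \<Sum>q\<in>UNIV. \<Sum>r\<in>UNIV. \<Sum>s\<in>UNIV.
            (if hz p q r s then (if noN p q r s then 1 else 0) else 0) *
            (T n (E (t$1)) p * T n (E (t$2)) q * T n (E (t$3)) r * T n (E (t$4)) s))"
proof -
  have "DH (n - 1) t = (\<Sum>k\<in>Hstar n. (if k \<in> Hstar (n - 1) then 1 else 0) * phi k t)"
  proof -
    have "(\<Sum>k\<in>Hstar n. (if k \<in> Hstar (n - 1) then 1 else 0) * phi k t) = (\<Sum>k\<in>Hstar n. if k \<in> Hstar (n - 1) then phi k t else 0)"
      by (rule sum.cong) auto
    also have "\<dots> = (\<Sum>k\<in>Hstar n \<inter> Hstar (n - 1). phi k t)"
      by (rule sum.inter_restrict[symmetric]) (rule finite_Hstar)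
    also have "Hstar n \<inter> Hstar (n - 1) = Hstar (n - 1)" using Hstar_mono by blast
    finally show ?thesis unfolding DH_def by simp
  qed
  also have "\<dots> = (\<Sum>p\<in>UNIV. \<Sum>q\<in>UNIV. \<Sum>r\<in>UNIV. \<Sum>s\<in>UNIV.
            (if hz p q r s then (if noN p q r s then 1 else 0) else 0) *
            (T n (E (t$1)) p * T n (E (t$2)) q * T n (E (t$3)) r * T n (E (t$4)) s))"
  proof (rule main_expand[OF n t])
    fix a b c d assume h: "a \<le> n" "b \<le> n" "c \<le> n" "d \<le> n" "a = 0 \<or> b = 0 \<or> c = 0 \<or> d = 0"
    have "kap a b c d \<in> Hstar (n - 1) \<longleftrightarrow> (a \<noteq> n \<and> b \<noteq> n \<and> c \<noteq> n \<and> d \<noteq> n)"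
    proof
      assume k: "kap a b c d \<in> Hstar (n - 1)"
      then have bd: "\<forall>i j. kap a b c d $ i - kap a b c d $ j \<le> 4 * int (n - 1)" unfolding Hstar_iff by blast
      have "int a - int b \<le> int (n - 1)" "int a - int c \<le> int (n - 1)" "int a - int d \<le> int (n - 1)"
           "int b - int a \<le> int (n - 1)" "int b - int c \<le> int (n - 1)" "int b - int d \<le> int (n - 1)"
           "int c - int a \<le> int (n - 1)" "int c - int b \<le> int (n - 1)" "int c - int d \<le> int (n - 1)"
           "int d - int a \<le> int (n - 1)" "int d - int b \<le> int (n - 1)" "int d - int c \<le> int (n - 1)"
        using bd[rule_format, of 1 2] bd[rule_format, of 1 3] bd[rule_format, of 1 4]
          bd[rule_format, of 2 1] bd[rule_format, of 2 3] bd[rule_format, of 2 4]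
          bd[rule_format, of 3 1] bd[rule_format, of 3 2] bd[rule_format, of 3 4]
          bd[rule_format, of 4 1] bd[rule_format, of 4 2] bd[rule_format, of 4 3] by simp_all
      then show "a \<noteq> n \<and> b \<noteq> n \<and> c \<noteq> n \<and> d \<noteq> n" using h n by auto
    next
      assume "a \<noteq> n \<and> b \<noteq> n \<and> c \<noteq> n \<and> d \<noteq> n"
      then have "(a,b,c,d) \<in> Abox (n - 1)" using h unfolding Abox_def by auto
      from bij_betw_apply[OF kap_bij this] show "kap a b c d \<in> Hstar (n - 1)" by simp
    qed
    moreover have "noN (cl n a) (cl n b) (cl n c) (cl n d) \<longleftrightarrow> (a \<noteq> n \<and> b \<noteq> n \<and> c \<noteq> n \<and> d \<noteq> n)"
      unfolding noN_def by (simp add: cl_eqs[OF n])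
    ultimately show "(if kap a b c d \<in> Hstar (n - 1) then 1 else 0) =
       (if noN (cl n a) (cl n b) (cl n c) (cl n d) then 1 else 0)" by simp
  qed
  finally show ?thesis .
qed

lemma ea_add: "ea n (x + y) = ea n x * ea n y"
  unfolding ea_def by (simp add: algebra_simps exp_add[symmetric])

lemma ea_2: "ea n (2 * x) = ea n x ^ 2"
  unfolding ea_def by (simp add: exp_of_nat_mult[symmetric] algebra_simps)

lemma EN: "E x ^ n = ea n x ^ 2"
  unfolding E_pow ea_2[symmetric] unfolding E_def ea_def by (simp add: algebra_simps)

lemma TV_gen: "n \<ge> 1 \<Longrightarrow> T n (E x) p = V (ea n x * complex_of_real (sinq (real n - 1) x)) (ea n x ^ 2) p"
  by (cases p) (simp_all add: T_simps sinq_lemma EN)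

lemma sumA: "(\<Sum>\<nu>\<in>UNIV. g \<nu> * (\<Sum>j\<in>UNIV - {\<nu>}. f j \<nu>)) =
   g 1 * (f 2 1 + f 3 1 + f 4 1) + g 2 * (f 1 2 + f 3 2 + f 4 2) + g 3 * (f 1 3 + f 2 3 + f 4 3) + g 4 * (f 1 4 + f 2 4 + f 3 4)"
  for g :: "4 \<Rightarrow> real"
proof -
  have e: "(\<Sum>j\<in>UNIV - {\<nu>}. f j \<nu>) = (\<Sum>j\<in>UNIV. f j \<nu>) - f \<nu> \<nu>" for \<nu>
    by (simp add: sum_diff1)
  have "(\<Sum>\<nu>\<in>UNIV. g \<nu> * (\<Sum>j\<in>UNIV - {\<nu>}. f j \<nu>)) = (\<Sum>\<nu>\<in>UNIV. g \<nu> * ((\<Sum>j\<in>UNIV. f j \<nu>) - f \<nu> \<nu>))"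
    by (simp only: e)
  also have "\<dots> = g 1 * ((f 1 1 + f 2 1 + f 3 1 + f 4 1) - f 1 1) + g 2 * ((f 1 2 + f 2 2 + f 3 2 + f 4 2) - f 2 2)
     + g 3 * ((f 1 3 + f 2 3 + f 3 3 + f 4 3) - f 3 3) + g 4 * ((f 1 4 + f 2 4 + f 3 4 + f 4 4) - f 4 4)"
    by (simp only: sum_4)
  also have "\<dots> = g 1 * (f 2 1 + f 3 1 + f 4 1) + g 2 * (f 1 2 + f 3 2 + f 4 2) + g 3 * (f 1 3 + f 2 3 + f 4 3) + g 4 * (f 1 4 + f 2 4 + f 3 4)"
    by (simp add: algebra_simps)
  finally show ?thesis .
qed

lemma less4: "(\<mu>::4) < \<nu> \<longleftrightarrow> Rep_bit0 \<mu> < Rep_bit0 \<nu>" by (simp add: less_bit0_def)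

lemma sumC: "(\<Sum>(\<mu>, \<nu>)\<in>{(\<mu>::4, \<nu>). \<mu> < \<nu>}. f \<mu> \<nu>) = f 4 1 + f 4 2 + f 4 3 + f 1 2 + f 1 3 + f 2 3"
  for f :: "4 \<Rightarrow> 4 \<Rightarrow> real"
proof -
  have r: "Rep_bit0 (1::4) = 1" "Rep_bit0 (2::4) = 2" "Rep_bit0 (3::4) = 3" "Rep_bit0 (4::4) = 0"
    by (simp_all add: bit0.Rep_numeral bit0.Rep_1)
  have l: "(4::4) < 1 \<longleftrightarrow> True" "(4::4) < 2 \<longleftrightarrow> True" "(4::4) < 3 \<longleftrightarrow> True" "(1::4) < 2 \<longleftrightarrow> True" "(1::4) < 3 \<longleftrightarrow> True" "(2::4) < 3 \<longleftrightarrow> True"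
    "(a::4) < a \<longleftrightarrow> False" "(1::4) < 4 \<longleftrightarrow> False" "(2::4) < 4 \<longleftrightarrow> False" "(3::4) < 4 \<longleftrightarrow> False" "(2::4) < 1 \<longleftrightarrow> False" "(3::4) < 1 \<longleftrightarrow> False" "(3::4) < 2 \<longleftrightarrow> False" for a
    by (simp_all add: less4 r)
  have "{(\<mu>::4, \<nu>). \<mu> < \<nu>} = {x \<in> UNIV \<times> UNIV. case x of (\<mu>, \<nu>) \<Rightarrow> \<mu> < \<nu>}" by auto
  then have "(\<Sum>(\<mu>, \<nu>)\<in>{(\<mu>::4, \<nu>). \<mu> < \<nu>}. f \<mu> \<nu>) = (\<Sum>x\<in>UNIV \<times> UNIV. if (case x of (\<mu>, \<nu>) \<Rightarrow> \<mu> < \<nu>) then (case x of (\<mu>, \<nu>) \<Rightarrow> f \<mu> \<nu>) else 0)"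
    by (simp only: sum.inter_filter[OF finite])
  also have "\<dots> = (\<Sum>\<mu>\<in>UNIV. \<Sum>\<nu>\<in>UNIV. if \<mu> < \<nu> then f \<mu> \<nu> else 0)"
    unfolding sum.cartesian_product by (rule sum.cong) (auto split: prod.splits)
  also have "\<dots> = f 4 1 + f 4 2 + f 4 3 + f 1 2 + f 1 3 + f 2 3"
    by (simp only: sum_4 l if_True if_False add_0_left add_0_right)
  finally show ?thesis .
qed

lemma cosE: "X + Y = 0 \<Longrightarrow> complex_of_real (cos (real n * pi * X)) = (ea n X + ea n Y) / 2"
proof -
  assume "X + Y = 0"
  then have Y: "Y = - X" by simp
  have "complex_of_real (cos (real n * pi * X)) = cos (complex_of_real (real n * pi * X))"
    by (simp only: cos_of_real)
  also have "\<dots> = (exp (\<i> * complex_of_real (real n * pi * X)) + exp (- (\<i> * complex_of_real (real n * pi * X)))) / 2"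
    by (rule cos_exp_eq)
  also have "exp (- (\<i> * complex_of_real (real n * pi * X))) = ea n Y"
    unfolding ea_def Y by (simp add: of_real_minus)
  finally show ?thesis unfolding ea_def .
qed

lemma cA: "t$j + t$v + t$k + t$l = 0 \<Longrightarrow> complex_of_real (cos (real n * pi * (2 * t$j + t$v))) =
   (ea n (t$j) ^ 2 * ea n (t$v) + ea n (t$k) ^ 2 * ea n (t$l) ^ 2 * ea n (t$v)) / 2"
proof -
  assume h: "t$j + t$v + t$k + t$l = 0"
  have "complex_of_real (cos (real n * pi * (2 * t$j + t$v))) = (ea n (2 * t$j + t$v) + ea n (2 * t$k + 2 * t$l + t$v)) / 2"
    by (rule cosE) (use h in linarith)
  then show ?thesis by (simp only: ea_add ea_2)
qed

lemma cB: "t$j + t$k + t$l + t$m = 0 \<Longrightarrow> complex_of_real (cos (2 * pi * real n * t$j)) =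
   (ea n (t$j) ^ 2 + ea n (t$k) ^ 2 * ea n (t$l) ^ 2 * ea n (t$m) ^ 2) / 2"
proof -
  assume h: "t$j + t$k + t$l + t$m = 0"
  have e: "2 * pi * real n * t$j = real n * pi * (2 * t$j)" by simp
  have "complex_of_real (cos (real n * pi * (2 * t$j))) = (ea n (2 * t$j) + ea n (2 * t$k + 2 * t$l + 2 * t$m)) / 2"
    by (rule cosE) (use h in linarith)
  then show ?thesis unfolding e by (simp only: ea_add ea_2)
qed

lemma cC: "t$j + t$v + t$k + t$l = 0 \<Longrightarrow> complex_of_real (cos (2 * pi * real n * (t$j + t$v))) =
   (ea n (t$j) ^ 2 * ea n (t$v) ^ 2 + ea n (t$k) ^ 2 * ea n (t$l) ^ 2) / 2"
proof -
  assume h: "t$j + t$v + t$k + t$l = 0"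
  have e: "2 * pi * real n * (t$j + t$v) = real n * pi * (2 * t$j + 2 * t$v)" by (simp add: algebra_simps)
  have "complex_of_real (cos (real n * pi * (2 * t$j + 2 * t$v))) = (ea n (2 * t$j + 2 * t$v) + ea n (2 * t$k + 2 * t$l)) / 2"
    by (rule cosE) (use h in linarith)
  then show ?thesis unfolding e by (simp only: ea_add ea_2)
qed

lemma part_d:
  assumes n: "n \<ge> 1" and t: "t \<in> RH"
  shows "Phistar n t = complex_of_real (1 / (4 * real n ^ 3)) *
           ((DH n t + DH (n - 1) t) / 2
            - complex_of_real (
                (1/3) * (\<Sum>\<nu>\<in>UNIV. sinq (real n - 1) (t$\<nu>) *
                           (\<Sum>j\<in>UNIV - {\<nu>}. cos (real n * pi * (2 * t$j + t$\<nu>))))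
              + (1/2) * (\<Sum>j\<in>UNIV. cos (2 * pi * real n * t$j))
              + (1/3) * (\<Sum>(\<mu>, \<nu>)\<in>{(\<mu>::4, \<nu>). \<mu> < \<nu>}. cos (2 * pi * real n * (t$\<mu> + t$\<nu>)))))"
proof -
  have st: "t$1 + t$2 + t$3 + t$4 = 0" using t unfolding RH_def sum_4 by simp
  define a1 where "a1 = ea n (t$1)"
  define a2 where "a2 = ea n (t$2)"
  define a3 where "a3 = ea n (t$3)"
  define a4 where "a4 = ea n (t$4)"
  define q1 where "q1 = complex_of_real (sinq (real n - 1) (t$1))"
  define q2 where "q2 = complex_of_real (sinq (real n - 1) (t$2))"
  define q3 where "q3 = complex_of_real (sinq (real n - 1) (t$3))"
  define q4 where "q4 = complex_of_real (sinq (real n - 1) (t$4))"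
  have TV: "T n (E (t$1)) p = V (a1 * q1) (a1^2) p" "T n (E (t$2)) p = V (a2 * q2) (a2^2) p"
           "T n (E (t$3)) p = V (a3 * q3) (a3^2) p" "T n (E (t$4)) p = V (a4 * q4) (a4^2) p" for p
    unfolding a1_def a2_def a3_def a4_def q1_def q2_def q3_def q4_def by (simp_all only: TV_gen[OF n])
  have P: "Phistar n t = complex_of_real (1 / (4 * real n ^ 3)) *
      PS (\<lambda>p q r s. complex_of_real (wt p q r s)) (a1^2) (a2^2) (a3^2) (a4^2) (a1*q1) (a2*q2) (a3*q3) (a4*q4)"
    unfolding Phistar_RH[OF n t] TV PS_def ..
  have D: "DH n t = PS (\<lambda>p q r s. if hz p q r s then 1 else 0) (a1^2) (a2^2) (a3^2) (a4^2) (a1*q1) (a2*q2) (a3*q3) (a4*q4)"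
    unfolding DH_expand[OF n t] TV PS_def ..
  have D1: "DH (n - 1) t = PS (\<lambda>p q r s. if hz p q r s then (if noN p q r s then 1 else 0) else 0) (a1^2) (a2^2) (a3^2) (a4^2) (a1*q1) (a2*q2) (a3*q3) (a4*q4)"
    unfolding DH1_expand[OF n t] TV PS_def ..
  have f0: "t$2 + t$1 + t$3 + t$4 = 0" using st by linarith
  have f1: "t$3 + t$1 + t$2 + t$4 = 0" using st by linarith
  have f2: "t$4 + t$1 + t$2 + t$3 = 0" using st by linarith
  have f3: "t$1 + t$2 + t$3 + t$4 = 0" using st by linarith
  have f4: "t$3 + t$2 + t$1 + t$4 = 0" using st by linarith
  have f5: "t$4 + t$2 + t$1 + t$3 = 0" using st by linarith
  have f6: "t$1 + t$3 + t$2 + t$4 = 0" using st by linarith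
  have f7: "t$2 + t$3 + t$1 + t$4 = 0" using st by linarith
  have f8: "t$4 + t$3 + t$1 + t$2 = 0" using st by linarith
  have f9: "t$1 + t$4 + t$2 + t$3 = 0" using st by linarith
  have f10: "t$2 + t$4 + t$1 + t$3 = 0" using st by linarith
  have f11: "t$3 + t$4 + t$1 + t$2 = 0" using st by linarith
  have f12: "t$1 + t$2 + t$3 + t$4 = 0" using st by linarith
  have f13: "t$2 + t$1 + t$3 + t$4 = 0" using st by linarith
  have f14: "t$3 + t$1 + t$2 + t$4 = 0" using st by linarith
  have f15: "t$4 + t$1 + t$2 + t$3 = 0" using st by linarith
  have f16: "t$4 + t$1 + t$2 + t$3 = 0" using st by linarith
  have f17: "t$4 + t$2 + t$1 + t$3 = 0" using st by linarith
  have f18: "t$4 + t$3 + t$1 + t$2 = 0" using st by linarith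
  have f19: "t$1 + t$2 + t$3 + t$4 = 0" using st by linarith
  have f20: "t$1 + t$3 + t$2 + t$4 = 0" using st by linarith
  have f21: "t$2 + t$3 + t$1 + t$4 = 0" using st by linarith
  note cs = cA[of t 2 1 3 4 n, OF f0] cA[of t 3 1 2 4 n, OF f1] cA[of t 4 1 2 3 n, OF f2] cA[of t 1 2 3 4 n, OF f3] cA[of t 3 2 1 4 n, OF f4] cA[of t 4 2 1 3 n, OF f5] cA[of t 1 3 2 4 n, OF f6] cA[of t 2 3 1 4 n, OF f7] cA[of t 4 3 1 2 n, OF f8] cA[of t 1 4 2 3 n, OF f9] cA[of t 2 4 1 3 n, OF f10] cA[of t 3 4 1 2 n, OF f11] cB[of t 1 2 3 4 n, OF f12] cB[of t 2 1 3 4 n, OF f13] cB[of t 3 1 2 4 n, OF f14] cB[of t 4 1 2 3 n, OF f15] cC[of t 4 1 2 3 n, OF f16] cC[of t 4 2 1 3 n, OF f17] cC[of t 4 3 1 2 n, OF f18] cC[of t 1 2 3 4 n, OF f19] cC[of t 1 3 2 4 n, OF f20] cC[of t 2 3 1 4 n, OF f21]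
  have R: "complex_of_real (
                (1/3) * (\<Sum>\<nu>\<in>UNIV. sinq (real n - 1) (t$\<nu>) *
                           (\<Sum>j\<in>UNIV - {\<nu>}. cos (real n * pi * (2 * t$j + t$\<nu>))))
              + (1/2) * (\<Sum>j\<in>UNIV. cos (2 * pi * real n * t$j))
              + (1/3) * (\<Sum>(\<mu>, \<nu>)\<in>{(\<mu>::4, \<nu>). \<mu> < \<nu>}. cos (2 * pi * real n * (t$\<mu> + t$\<nu>))))
     = (1/4 * (a1^2 + a2^2 + a3^2 + a4^2) + 1/4 * (a2^2*a3^2*a4^2 + a1^2*a3^2*a4^2 + a1^2*a2^2*a4^2 + a1^2*a2^2*a3^2)
      + 1/3 * (a1^2*a2^2 + a1^2*a3^2 + a1^2*a4^2 + a2^2*a3^2 + a2^2*a4^2 + a3^2*a4^2)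
      + 1/6 * ((a1*q1) * (a2^2 + a3^2 + a4^2 + a3^2*a4^2 + a2^2*a4^2 + a2^2*a3^2) + (a2*q2) * (a1^2 + a3^2 + a4^2 + a3^2*a4^2 + a1^2*a4^2 + a1^2*a3^2)
             + (a3*q3) * (a1^2 + a2^2 + a4^2 + a2^2*a4^2 + a1^2*a4^2 + a1^2*a2^2) + (a4*q4) * (a1^2 + a2^2 + a3^2 + a2^2*a3^2 + a1^2*a3^2 + a1^2*a2^2)))"
    unfolding sumA sum_4 sumC of_real_add of_real_mult of_real_divide of_real_1 of_real_numeral cs
      a1_def[symmetric] a2_def[symmetric] a3_def[symmetric] a4_def[symmetric]
      q1_def[symmetric] q2_def[symmetric] q3_def[symmetric] q4_def[symmetric]
    by (simp add: field_simps)
  show ?thesis unfolding P D D1 Bid R ..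
qed

lemma phi_diff: "phi k (t - g) = phi k t * phi k (- g)"
proof -
  have "(\<Sum>i\<in>UNIV. real_of_int (k$i) * (t - g)$i) = (\<Sum>i\<in>UNIV. real_of_int (k$i) * t$i) + (\<Sum>i\<in>UNIV. real_of_int (k$i) * (- g)$i)"
    by (simp add: algebra_simps sum.distrib[symmetric] sum_negf)
  then show ?thesis unfolding phi_def by (simp add: distrib_left exp_add)
qed

lemma part_a: "Istar n f \<in> Tn n"
proof -
  define C where "C = complex_of_real (1 / (4 * real n ^ 3))"
  define a where "a k = C * complex_of_real (ccoef n k) * (\<Sum>j\<in>Hstar n. f (grid n j) * phi k (- grid n j))" for k
  have "Istar n f = (\<lambda>t. \<Sum>k\<in>Hstar n. a k * phi k t)"
  proof
    fix t
    have "Istar n f t = (\<Sum>j\<in>Hstar n. \<Sum>k\<in>Hstar n. f (grid n j) * (C * (complex_of_real (ccoef n k) * (phi k t * phi k (- grid n j)))))"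
      unfolding Istar_def ell_def Phistar_def phi_diff C_def by (simp add: sum_distrib_left)
    also have "\<dots> = (\<Sum>k\<in>Hstar n. \<Sum>j\<in>Hstar n. f (grid n j) * (C * (complex_of_real (ccoef n k) * (phi k t * phi k (- grid n j)))))"
      by (rule sum.swap)
    also have "\<dots> = (\<Sum>k\<in>Hstar n. a k * phi k t)"
      unfolding a_def by (simp add: sum_distrib_left sum_distrib_right mult_ac)
    finally show "Istar n f t = (\<Sum>k\<in>Hstar n. a k * phi k t)" .
  qed
  then show ?thesis unfolding Tn_def by blast
qed

lemma grid_diff: "grid n j - grid n l = grid n (j - l)"
  unfolding grid_def by (simp add: vec_eq_iff diff_divide_distrib)

lemma interp_gen:
  assumes n: "n \<ge> 1" and j: "j \<in> Hstar n"
  shows "Istar n f (grid n j) = (\<Sum>l\<in>Hstar n. if \<forall>i. 4 * int n dvd (j - l)$i then f (grid n l) else 0)"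
  unfolding Istar_def ell_def grid_diff
proof (rule sum.cong[OF refl])
  fix l assume l: "l \<in> Hstar n"
  have sj: "j$1+j$2+j$3+j$4 = 0" and dj: "\<forall>i. 4 dvd (j$i - j$1)" using j by (auto simp: Hstar_iff)
  have sl: "l$1+l$2+l$3+l$4 = 0" and dl: "\<forall>i. 4 dvd (l$i - l$1)" using l by (auto simp: Hstar_iff)
  have sd: "(j - l)$1 + (j - l)$2 + (j - l)$3 + (j - l)$4 = 0" using sj sl by simp
  have dd: "\<forall>i. 4 dvd ((j - l)$i - (j - l)$1)"
  proof
    fix i
    have "(j - l)$i - (j - l)$1 = (j$i - j$1) - (l$i - l$1)" by simp
    then show "4 dvd ((j - l)$i - (j - l)$1)" using dj dl by (metis dvd_diff)
  qed
  show "f (grid n l) * Phistar n (grid n (j - l)) = (if \<forall>i. 4 * int n dvd (j - l)$i then f (grid n l) else 0)"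
    unfolding Phi_grid[OF n sd dd] by simp
qed

lemma Sset_eq:
  assumes n: "n \<ge> 1" and j: "j \<in> Hstar n"
  shows "Sset n j = {l \<in> Hstar n. \<forall>i. 4 * int n dvd (j - l)$i}"
proof (rule set_eqI, rule iffI)
  fix k assume "k \<in> Sset n j"
  then obtain m where k: "k \<in> Hstar n" and m: "k - j = (4 * int n) *s m" unfolding Sset_def by blast
  have "(j - k)$i = - (4 * int n * m$i)" for i using arg_cong[OF m, of "\<lambda>v. v$i"] by simp
  then show "k \<in> {l \<in> Hstar n. \<forall>i. 4 * int n dvd (j - l)$i}" using k by simp
next
  fix k assume "k \<in> {l \<in> Hstar n. \<forall>i. 4 * int n dvd (j - l)$i}"
  then have k: "k \<in> Hstar n" and dv: "\<forall>i. 4 * int n dvd (j - k)$i" by auto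
  define m where "m = (\<chi> i. (k$i - j$i) div (4 * int n))"
  have km: "k$i - j$i = 4 * int n * m$i" for i
  proof -
    have "4 * int n dvd (k$i - j$i)" using dv[rule_format, of i] by (simp add: dvd_diff_commute)
    then show ?thesis unfolding m_def by simp
  qed
  have "k - j = (4 * int n) *s m" unfolding vec_eq_iff using km by simp
  moreover have "m \<in> ZH"
  proof -
    have sj: "j$1+j$2+j$3+j$4 = 0" using j by (simp add: Hstar_iff)
    have sk: "k$1+k$2+k$3+k$4 = 0" using k by (simp add: Hstar_iff)
    have "4 * int n * (m$1 + m$2 + m$3 + m$4) = 0"
      using km[of 1] km[of 2] km[of 3] km[of 4] sj sk by (simp add: algebra_simps)
    then have "m$1 + m$2 + m$3 + m$4 = 0" using n by simp
    then show ?thesis unfolding ZH_def sum_4 by simp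
  qed
  ultimately show "k \<in> Sset n j" unfolding Sset_def using k by blast
qed

lemma interior_unique:
  assumes n: "n \<ge> 1" and j: "j \<in> Hcirc n" and l: "l \<in> Hstar n" and dv: "\<forall>i. 4 * int n dvd (j - l)$i"
  shows "l = j"
proof -
  define N where "N = 4 * int n"
  have N: "N > 0" unfolding N_def using n by simp
  obtain e where e: "\<And>i. l$i - j$i = N * e i"
  proof -
    have "\<forall>i. \<exists>c. l$i - j$i = N * c" using dv unfolding N_def by (metis dvd_def dvd_diff_commute vector_minus_component)
    then show ?thesis using that by metis
  qed
  have jc: "\<And>a b. a \<noteq> b \<Longrightarrow> - N < j$a - j$b" using j unfolding Hcirc_def N_def by auto
  have lb: "\<And>a b. l$a - l$b \<le> N" using l unfolding Hstar_iff N_def by auto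
  have ed: "e a - e b \<le> 1" if "a \<noteq> b" for a b
  proof -
    have "N * (e a - e b) = (l$a - l$b) - (j$a - j$b)" using e[of a] e[of b] by (simp add: algebra_simps)
    also have "\<dots> < 2 * N" using lb[of a b] jc[OF that] by simp
    finally have "N * (e a - e b) < N * 2" by (simp add: mult.commute)
    then have "e a - e b < 2" using N by (simp add: mult_less_cancel_left)
    then show ?thesis by simp
  qed
  have sj: "j$1+j$2+j$3+j$4 = 0" using j unfolding Hcirc_def HH_def ZH_def sum_4 by simp
  have sl: "l$1+l$2+l$3+l$4 = 0" using l by (simp add: Hstar_iff)
  have "N * (e 1 + e 2 + e 3 + e 4) = 0" using e[of 1] e[of 2] e[of 3] e[of 4] sj sl by (simp add: algebra_simps)
  then have se: "e 1 + e 2 + e 3 + e 4 = 0" using N by simp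
  have d: "e 1 - e 2 \<le> 1" "e 1 - e 3 \<le> 1" "e 1 - e 4 \<le> 1" "e 2 - e 1 \<le> 1" "e 2 - e 3 \<le> 1" "e 2 - e 4 \<le> 1"
          "e 3 - e 1 \<le> 1" "e 3 - e 2 \<le> 1" "e 3 - e 4 \<le> 1" "e 4 - e 1 \<le> 1" "e 4 - e 2 \<le> 1" "e 4 - e 3 \<le> 1"
    by (rule ed; simp)+
  have "e 1 = 0 \<and> e 2 = 0 \<and> e 3 = 0 \<and> e 4 = 0"
  proof -
    have c: "x \<ge> 1 \<or> x \<le> -1 \<or> x = 0" for x :: int by linarith
    have "e 1 = 0" using c[of "e 1"] d se by linarith
    moreover have "e 2 = 0" using c[of "e 2"] d se by linarith
    moreover have "e 3 = 0" using c[of "e 3"] d se by linarith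
    moreover have "e 4 = 0" using c[of "e 4"] d se by linarith
    ultimately show ?thesis by blast
  qed
  then have "\<forall>i. e i = 0" unfolding all4 .
  then show "l = j" unfolding vec_eq_iff using e by (metis eq_iff_diff_eq_0 mult_zero_right)
qed

lemma max_neg: "max (- a) (- b) = - min a (b::int)" by (simp add: min_def max_def)
lemma min_neg: "min (- a) (- b) = - max a (b::int)" by (simp add: min_def max_def)

lemma cmax_neg: "cmax (- k) = - cmin k"
  unfolding cmax_def cmin_def range4 Max4 Min4 by (simp only: vector_uminus_component max_neg)

lemma cmin_neg: "cmin (- k) = - cmax k"
  unfolding cmax_def cmin_def range4 Max4 Min4 by (simp only: vector_uminus_component min_neg)

lemma ccoef_neg: "ccoef n (- k) = ccoef n k"
proof -
  have e1: "{i. (- k)$i = cmax (- k)} = {i. k$i = cmin k}" unfolding cmax_neg by auto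
  have e2: "{i. (- k)$i = cmin (- k)} = {i. k$i = cmax k}" unfolding cmin_neg by auto
  have e3: "cmax (- k) - cmin (- k) = cmax k - cmin k" unfolding cmax_neg cmin_neg by simp
  have b: "(q + p) choose q = (p + q) choose p" for p q :: nat
    using binomial_symmetric[of q "q + p"] by (simp add: add.commute)
  show ?thesis unfolding ccoef_def Let_def e1 e2 e3 b ..
qed

lemma Hstar_neg: "k \<in> Hstar n \<Longrightarrow> - k \<in> Hstar n"
proof -
  assume k: "k \<in> Hstar n"
  then have s: "k$1+k$2+k$3+k$4 = 0" and dv: "\<forall>i. 4 dvd (k$i - k$1)" and bd: "\<forall>i j. k$i - k$j \<le> 4 * int n"
    by (auto simp: Hstar_iff)
  have "\<forall>i. 4 dvd ((- k)$i - (- k)$1)"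
  proof
    fix i
    have e: "(- k)$i - (- k)$1 = - (k$i - k$1)" by simp
    show "4 dvd ((- k)$i - (- k)$1)" unfolding e dvd_minus_iff using dv by blast
  qed
  moreover have "\<forall>i j. (- k)$i - (- k)$j \<le> 4 * int n"
  proof (intro allI)
    fix i j
    have e: "(- k)$i - (- k)$j = k$j - k$i" by simp
    show "(- k)$i - (- k)$j \<le> 4 * int n" unfolding e using bd by blast
  qed
  moreover have "(- k)$1+(- k)$2+(- k)$3+(- k)$4 = 0" using s by simp
  ultimately show ?thesis unfolding Hstar_iff by blast
qed

lemma phi_neg: "phi (- k) t = cnj (phi k t)"
proof -
  have h: "(\<Sum>i\<in>UNIV. real_of_int ((- k)$i) * t$i) = - (\<Sum>i\<in>UNIV. real_of_int (k$i) * t$i)"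
    by (simp add: sum_negf)
  show ?thesis unfolding phi_def h exp_cnj by simp
qed

lemma part_c: "Im (Phistar n t) = 0"
proof -
  define S where "S = (\<Sum>k\<in>Hstar n. complex_of_real (ccoef n k) * phi k t)"
  have "cnj S = (\<Sum>k\<in>Hstar n. complex_of_real (ccoef n (- k)) * phi (- k) t)"
    unfolding S_def by (simp add: phi_neg ccoef_neg)
  also have "\<dots> = (\<Sum>k\<in>uminus ` Hstar n. complex_of_real (ccoef n k) * phi k t)"
    by (rule sum.reindex[symmetric, unfolded comp_def]) (simp add: inj_on_def)
  also have "uminus ` Hstar n = Hstar n"
  proof
    show "uminus ` Hstar n \<subseteq> Hstar n" using Hstar_neg by blast
    show "Hstar n \<subseteq> uminus ` Hstar n"
    proof
      fix k assume "k \<in> Hstar n"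
      then have "- k \<in> Hstar n" by (rule Hstar_neg)
      then show "k \<in> uminus ` Hstar n" by (metis image_eqI minus_minus)
    qed
  qed
  finally have "cnj S = S" unfolding S_def .
  then have "Im (cnj S) = Im S" by (simp only:)
  then have "Im S = 0" by simp
  then show ?thesis unfolding Phistar_def S_def[symmetric] by simp
qed

lemma Hcirc_sub: "Hcirc n \<subseteq> Hstar n"
  unfolding Hcirc_def Hstar_def by (auto simp: less_imp_le)

theorem theorem3p18:
  fixes n :: nat and f :: "real^4 \<Rightarrow> complex"
  assumes "n \<ge> 1" and "continuous_on (closure OmegaH) f"
  shows "Istar n f \<in> Tn n \<and>
    (\<forall>j\<in>Hcirc n. Istar n f (grid n j) = f (grid n j)) \<and>
    (\<forall>j\<in>Hstar n - Hcirc n. Istar n f (grid n j) = (\<Sum>k\<in>Sset n j. f (grid n k))) \<and>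
    (\<forall>t. Im (Phistar n t) = 0) \<and>
    (\<forall>t\<in>RH. Phistar n t = complex_of_real (1 / (4 * real n ^ 3)) *
           ((DH n t + DH (n - 1) t) / 2
            - complex_of_real (
                (1/3) * (\<Sum>\<nu>\<in>UNIV. sinq (real n - 1) (t$\<nu>) *
                           (\<Sum>j\<in>UNIV - {\<nu>}. cos (real n * pi * (2 * t$j + t$\<nu>))))
              + (1/2) * (\<Sum>j\<in>UNIV. cos (2 * pi * real n * t$j))
              + (1/3) * (\<Sum>(\<mu>, \<nu>)\<in>{(\<mu>::4, \<nu>). \<mu> < \<nu>}. cos (2 * pi * real n * (t$\<mu> + t$\<nu>))))))"
proof -
  have n: "n \<ge> 1" by fact
  have a: "Istar n f \<in> Tn n" by (rule part_a)
  have b1: "\<forall>j\<in>Hcirc n. Istar n f (grid n j) = f (grid n j)"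
  proof
    fix j assume j: "j \<in> Hcirc n"
    then have jH: "j \<in> Hstar n" using Hcirc_sub by blast
    have "Istar n f (grid n j) = (\<Sum>l\<in>Hstar n. if \<forall>i. 4 * int n dvd (j - l)$i then f (grid n l) else 0)"
      by (rule interp_gen[OF n jH])
    also have "\<dots> = (\<Sum>l\<in>Hstar n. if l = j then f (grid n l) else 0)"
    proof (rule sum.cong[OF refl])
      fix l assume l: "l \<in> Hstar n"
      have "(\<forall>i. 4 * int n dvd (j - l)$i) \<longleftrightarrow> l = j"
      proof
        assume "\<forall>i. 4 * int n dvd (j - l)$i"
        then show "l = j" by (rule interior_unique[OF n j l])
      next
        assume "l = j" then show "\<forall>i. 4 * int n dvd (j - l)$i" by simp
      qed
      then show "(if \<forall>i. 4 * int n dvd (j - l)$i then f (grid n l) else 0) = (if l = j then f (grid n l) else 0)"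
        by simp
    qed
    also have "\<dots> = f (grid n j)" using jH finite_Hstar by (simp add: sum.delta')
    finally show "Istar n f (grid n j) = f (grid n j)" .
  qed
  have b2: "\<forall>j\<in>Hstar n - Hcirc n. Istar n f (grid n j) = (\<Sum>k\<in>Sset n j. f (grid n k))"
  proof
    fix j assume "j \<in> Hstar n - Hcirc n"
    then have jH: "j \<in> Hstar n" by blast
    have "Istar n f (grid n j) = (\<Sum>l\<in>Hstar n. if \<forall>i. 4 * int n dvd (j - l)$i then f (grid n l) else 0)"
      by (rule interp_gen[OF n jH])
    also have "\<dots> = (\<Sum>l\<in>{l \<in> Hstar n. \<forall>i. 4 * int n dvd (j - l)$i}. f (grid n l))"
      by (rule sum.inter_filter[symmetric]) (rule finite_Hstar)
    also have "\<dots> = (\<Sum>k\<in>Sset n j. f (grid n k))" unfolding Sset_eq[OF n jH] ..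
    finally show "Istar n f (grid n j) = (\<Sum>k\<in>Sset n j. f (grid n k))" .
  qed
  have c: "\<forall>t. Im (Phistar n t) = 0" using part_c by blast
  have d: "\<forall>t\<in>RH. Phistar n t = complex_of_real (1 / (4 * real n ^ 3)) *
           ((DH n t + DH (n - 1) t) / 2
            - complex_of_real (
                (1/3) * (\<Sum>\<nu>\<in>UNIV. sinq (real n - 1) (t$\<nu>) *
                           (\<Sum>j\<in>UNIV - {\<nu>}. cos (real n * pi * (2 * t$j + t$\<nu>))))
              + (1/2) * (\<Sum>j\<in>UNIV. cos (2 * pi * real n * t$j))
              + (1/3) * (\<Sum>(\<mu>, \<nu>)\<in>{(\<mu>::4, \<nu>). \<mu> < \<nu>}. cos (2 * pi * real n * (t$\<mu> + t$\<nu>)))))"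
    using part_d[OF n] by blast
  show ?thesis using a b1 b2 c d by blast
qed

end
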